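(* Let $\sigma_e>0$, $\beta=(\beta_2,\beta_1)^T\in\mathbb{R}^2$. For every integer $n>2$ let $x_1,\dots,x_n\in\mathbb{R}$ be deterministic (possibly depending on $n$), $X_n$ the $n\times2$ matrix with rows $(1,x_i)$, $Y_n=(y_1,\dots,y_n)^T\sim\mathcal{N}(X_n\beta,\sigma_e^2I_{n\times n})$, and let $\Delta_n>0$, $\rho_n>0$ be sequences. Assume: (1) $\bar x\to c_x$, $\overline{x^2}\to c_{x^2}$ with $c_{x^2}>c_x^2$; (2) $\eta_n^2\to\eta^2$ for some $\eta\in\mathbb{R}$, where $\eta_n^2=\|X_n\beta-X_n\beta^N\|^2/\sigma_e^2$, $\beta^N=(\beta_2+\beta_1\bar x,0)^T$; (3) $\Delta_n^2/(\rho_nn)\to0$, $\Delta_n^4/(\rho_nn)\to0$; (4) $\mathbb{P}[\exists i,\ y_i\notin[-\Delta_n,\Delta_n]]\to0$ and $x_i\in[-\Delta_n,\Delta_n]$ for all $i$. Then, with the constants $c_y=\beta_2+\beta_1c_x$, $c_{xy}=\beta_2c_x+\beta_1c_{x^2}$, $c_a=c_{xy}-c_xc_y$, $c_b=c_{x^2}-c_x^2$, $c_{y^2}=\beta_2^2+2c_x\beta_1\beta_2+\beta_1^2c_{x^2}+\sigma_e^2$ and $C^{1/2}=\frac{1}{\sqrt{c_{x^2}+1+2\sqrt{c_b}}}\begin{pmatrix}1+\sqrt{c_b}&c_x\\c_x&c_{x^2}+\sqrt{c_b}\end{pmatrix}$: (1) $\sqrt n|\tilde{\bar x}-\bar x|\xrightarrow{P}0$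 and $\tilde{\bar x}\xrightarrow{P}c_x$; (2) $\sqrt n|\tilde{\bar y}-\bar y|\xrightarrow{P}0$ and $\tilde{\bar y}\xrightarrow{P}c_y$; (3) $\sqrt n|\widetilde{\overline{x^2}}-\overline{x^2}|\xrightarrow{P}0$ and $\widetilde{\overline{x^2}}\xrightarrow{P}c_{x^2}$; (4) $\sqrt n|\widetilde{\overline{xy}}-\overline{xy}|\xrightarrow{P}0$ and $\widetilde{\overline{xy}}\xrightarrow{P}c_{xy}$; (5) $\sqrt n|\tilde{\bar x}^2-\bar x^2|\xrightarrow{P}0$; (6) $\sqrt n|\tilde{\bar x}\tilde{\bar y}-\bar x\bar y|\xrightarrow{P}0$; (7) $\widetilde{\overline{xy}}-\tilde{\bar x}\tilde{\bar y}\xrightarrow{P}c_a$; (8) $\widetilde{\sigma^2_x}\xrightarrow{P}c_b$ (and $c_b\neq 0$); (9) $\sqrt n(\widetilde{\sigma^2_x}-\widehat{\sigma^2_x})\xrightarrow{P}0$; (10) $\sqrt n(\tilde E_n-\hat E_n)\xrightarrow{P}0$ and $\tilde E_n\xrightarrow{P}C^{1/2}$; (11) $\tilde F_n\xrightarrow{P}(c_y,c_{xy})^T$; (12) $\tilde G_n\xrightarrow{P}c_{y^2}$.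
   Context: $\bar x=\frac1n\sum x_i$, $\overline{x^2}=\frac1n\sum x_i^2$, $\bar y=\frac1n\sum y_i$, $\overline{xy}=\frac1n\sum x_iy_i$, $\widehat{\sigma^2_x}=\overline{x^2}-\bar x^2$, $\hat E_n=(X_n^TX_n/n)^{1/2}$ (positive-definite square root). $[z]_a^b$ is $z$ clipped to $[a,b]$. With $\Delta=\Delta_n$, $\rho'=\rho_n/5$ and independent Gaussian noises: $\tilde{\bar x}=\frac1n\sum_i[x_i]_{-\Delta}^{\Delta}+\mathcal{N}(0,\frac{2\Delta^2}{\rho'n^2})$, $\tilde{\bar y}=\frac1n\sum_i[y_i]_{-\Delta}^{\Delta}+\mathcal{N}(0,\frac{2\Delta^2}{\rho'n^2})$, $\widetilde{\overline{x^2}}=\frac1n\sum_i[x_i^2]_0^{\Delta^2}+\mathcal{N}(0,\frac{\Delta^4}{2\rho'n^2})$, $\widetilde{\overline{xy}}=\frac1n\sum_i[x_iy_i]_{-\Delta^2}^{\Delta^2}+\mathcal{N}(0,\frac{2\Delta^4}{\rho'n^2})$, $\widetilde{\overline{y^2}}=\frac1n\sum_i[y_i^2]_0^{\Delta^2}+\mathcal{N}(0,\frac{\Delta^4}{2\rho'n^2})$. Further $\widetilde{\sigma^2_x}=\widetilde{\overline{x^2}}-\tilde{\bar x}^2$, $\tilde E_n=\frac{1}{\sqrt{\widetilde{\overline{x^2}}+1+2\sqrt{\widetilde{\sigma^2_x}}}}\begin{pmatrix}1+\sqrt{\widetilde{\sigma^2_x}}&\tilde{\bar x}\\\tilde{\bar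 x}&\widetilde{\overline{x^2}}+\sqrt{\widetilde{\sigma^2_x}}\end{pmatrix}$ where square roots are taken with non-negative real and imaginary parts, $\tilde F_n=(\tilde{\bar y},\widetilde{\overline{xy}})^T$, $\tilde G_n=\widetilde{\overline{y^2}}$. Convergence is as $n\to\infty$. *)

theory Defs
  imports "HOL-Probability.Probability"
begin

definition clip :: "real \<Rightarrow> real \<Rightarrow> real \<Rightarrow> real" where
  "clip a b z = max a (min b z)"

definition mean :: "nat \<Rightarrow> (nat \<Rightarrow> real) \<Rightarrow> real" where
  "mean n f = (\<Sum>i<n. f i) / real n"

definition conv_prob :: "(nat \<Rightarrow> 'a measure) \<Rightarrow> (nat \<Rightarrow> 'a \<Rightarrow> 'b::metric_space) \<Rightarrow> 'b \<Rightarrow> bool" where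
  "conv_prob M X c \<longleftrightarrow>
     (\<forall>e>0. (\<lambda>n. measure (M n) {\<omega> \<in> space (M n). dist (X n \<omega>) c > e}) \<longlonglongrightarrow> 0)"

definition pd_sqrt :: "real^2^2 \<Rightarrow> real^2^2" where
  "pd_sqrt A = (THE S. transpose S = S \<and> (\<forall>v. v \<noteq> 0 \<longrightarrow> v \<bullet> (S *v v) > 0) \<and> S ** S = A)"

definition cmat :: "real^2^2 \<Rightarrow> complex^2^2" where
  "cmat A = (\<chi> i j. complex_of_real (A $ i $ j))"

text \<open>Hat-E_n = (X_n^T X_n / n)^{1/2}, where X_n has rows (1, x_i).\<close>
definition Ehat :: "(nat \<Rightarrow> nat \<Rightarrow> real) \<Rightarrow> nat \<Rightarrow> real^2^2" where
  "Ehat x n = pd_sqrt (\<chi> i j. mean n (\<lambda>k. (vector [1, x n k] :: real^2) $ i * (vector [1, x n k] :: real^2) $ j))"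

text \<open>Private statistics. Z n j \<omega> (j = 0..4) are standard normal variables; the Gaussian
  noise N(0, v) is realised as sqrt v * Z. Here rho' = rho n / 5.\<close>
definition tx :: "(nat \<Rightarrow> real) \<Rightarrow> (nat \<Rightarrow> real) \<Rightarrow> (nat \<Rightarrow> nat \<Rightarrow> real) \<Rightarrow> (nat \<Rightarrow> nat \<Rightarrow> 'a \<Rightarrow> real) \<Rightarrow> nat \<Rightarrow> 'a \<Rightarrow> real" where
  "tx \<Delta> \<rho> x Z n \<omega> = mean n (\<lambda>i. clip (- \<Delta> n) (\<Delta> n) (x n i))
      + sqrt (2 * (\<Delta> n)^2 / ((\<rho> n / 5) * (real n)^2)) * Z n 0 \<omega>"

definition ty :: "(nat \<Rightarrow> real) \<Rightarrow> (nat \<Rightarrow> real) \<Rightarrow> (nat \<Rightarrow> nat \<Rightarrow> 'a \<Rightarrow> real) \<Rightarrow> (nat \<Rightarrow> nat \<Rightarrow> 'a \<Rightarrow> real) \<Rightarrow> nat \<Rightarrow> 'a \<Rightarrow> real" where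
  "ty \<Delta> \<rho> y Z n \<omega> = mean n (\<lambda>i. clip (- \<Delta> n) (\<Delta> n) (y n i \<omega>))
      + sqrt (2 * (\<Delta> n)^2 / ((\<rho> n / 5) * (real n)^2)) * Z n 1 \<omega>"

definition tx2 :: "(nat \<Rightarrow> real) \<Rightarrow> (nat \<Rightarrow> real) \<Rightarrow> (nat \<Rightarrow> nat \<Rightarrow> real) \<Rightarrow> (nat \<Rightarrow> nat \<Rightarrow> 'a \<Rightarrow> real) \<Rightarrow> nat \<Rightarrow> 'a \<Rightarrow> real" where
  "tx2 \<Delta> \<rho> x Z n \<omega> = mean n (\<lambda>i. clip 0 ((\<Delta> n)^2) ((x n i)^2))
      + sqrt ((\<Delta> n)^4 / (2 * (\<rho> n / 5) * (real n)^2)) * Z n 2 \<omega>"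

definition txy :: "(nat \<Rightarrow> real) \<Rightarrow> (nat \<Rightarrow> real) \<Rightarrow> (nat \<Rightarrow> nat \<Rightarrow> real) \<Rightarrow> (nat \<Rightarrow> nat \<Rightarrow> 'a \<Rightarrow> real) \<Rightarrow> (nat \<Rightarrow> nat \<Rightarrow> 'a \<Rightarrow> real) \<Rightarrow> nat \<Rightarrow> 'a \<Rightarrow> real" where
  "txy \<Delta> \<rho> x y Z n \<omega> = mean n (\<lambda>i. clip (- ((\<Delta> n)^2)) ((\<Delta> n)^2) (x n i * y n i \<omega>))
      + sqrt (2 * (\<Delta> n)^4 / ((\<rho> n / 5) * (real n)^2)) * Z n 3 \<omega>"

definition ty2 :: "(nat \<Rightarrow> real) \<Rightarrow> (nat \<Rightarrow> real) \<Rightarrow> (nat \<Rightarrow> nat \<Rightarrow> 'a \<Rightarrow> real) \<Rightarrow> (nat \<Rightarrow> nat \<Rightarrow> 'a \<Rightarrow> real) \<Rightarrow> nat \<Rightarrow> 'a \<Rightarrow> real" where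
  "ty2 \<Delta> \<rho> y Z n \<omega> = mean n (\<lambda>i. clip 0 ((\<Delta> n)^2) ((y n i \<omega>)^2))
      + sqrt ((\<Delta> n)^4 / (2 * (\<rho> n / 5) * (real n)^2)) * Z n 4 \<omega>"

definition tsx :: "(nat \<Rightarrow> real) \<Rightarrow> (nat \<Rightarrow> real) \<Rightarrow> (nat \<Rightarrow> nat \<Rightarrow> real) \<Rightarrow> (nat \<Rightarrow> nat \<Rightarrow> 'a \<Rightarrow> real) \<Rightarrow> nat \<Rightarrow> 'a \<Rightarrow> real" where
  "tsx \<Delta> \<rho> x Z n \<omega> = tx2 \<Delta> \<rho> x Z n \<omega> - (tx \<Delta> \<rho> x Z n \<omega>)^2"

definition Etil :: "(nat \<Rightarrow> real) \<Rightarrow> (nat \<Rightarrow> real) \<Rightarrow> (nat \<Rightarrow> nat \<Rightarrow> real) \<Rightarrow> (nat \<Rightarrow> nat \<Rightarrow> 'a \<Rightarrow> real) \<Rightarrow> nat \<Rightarrow> 'a \<Rightarrow> complex^2^2" where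
  "Etil \<Delta> \<rho> x Z n \<omega> =
     (let a = complex_of_real (tx2 \<Delta> \<rho> x Z n \<omega>);
          m = complex_of_real (tx \<Delta> \<rho> x Z n \<omega>);
          s = csqrt (complex_of_real (tsx \<Delta> \<rho> x Z n \<omega>));
          d = csqrt (a + 1 + 2 * s)
      in vector [vector [(1 + s) / d, m / d], vector [m / d, (a + s) / d]])"

end

theory Submission
  imports Defs
begin

definition cpr :: "(nat \<Rightarrow> 'a measure) \<Rightarrow> (nat \<Rightarrow> 'a \<Rightarrow> 'b::metric_space) \<Rightarrow> 'b \<Rightarrow> bool" where
  "cpr M X c \<longleftrightarrow> (\<forall>e>0. \<forall>d>0. eventually (\<lambda>n. prob_space (M n) \<and>
      (\<exists>B\<in>sets (M n). {\<omega>\<in>space (M n). e < dist (X n \<omega>) c} \<subseteq> B \<and> measure (M n) B < d)) sequentially)"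

lemma cprD:
  assumes "cpr M X c" "e > 0" "d > 0"
  shows "eventually (\<lambda>n. prob_space (M n) \<and>
      (\<exists>B\<in>sets (M n). {\<omega>\<in>space (M n). e < dist (X n \<omega>) c} \<subseteq> B \<and> measure (M n) B < d)) sequentially"
  using assms unfolding cpr_def by blast

lemma cpr_conv_prob:
  assumes "cpr M X c" shows "conv_prob M X c"
  unfolding conv_prob_def
proof (intro allI impI)
  fix e :: real assume e: "e > 0"
  show "(\<lambda>n. measure (M n) {\<omega> \<in> space (M n). dist (X n \<omega>) c > e}) \<longlonglongrightarrow> 0"
  proof (rule LIMSEQ_I)
    fix r :: real assume r: "r > 0"
    from cprD[OF assms e r] obtain N where N: "\<And>n. n \<ge> N \<Longrightarrow> prob_space (M n) \<and>
      (\<exists>B\<in>sets (M n). {\<omega>\<in>space (M n). e < dist (X n \<omega>) c} \<subseteq> B \<and> measure (M n) B < r)"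
      unfolding eventually_sequentially by blast
    show "\<exists>no. \<forall>n\<ge>no. norm (measure (M n) {\<omega> \<in> space (M n). dist (X n \<omega>) c > e} - 0) < r"
    proof (intro exI allI impI)
      fix n assume "n \<ge> N"
      from N[OF this] obtain B where P: "prob_space (M n)" and B: "B \<in> sets (M n)"
        "{\<omega>\<in>space (M n). e < dist (X n \<omega>) c} \<subseteq> B" "measure (M n) B < r" by blast
      let ?A = "{\<omega> \<in> space (M n). dist (X n \<omega>) c > e}"
      have "measure (M n) ?A \<le> measure (M n) B"
      proof (cases "?A \<in> sets (M n)")
        case True
        interpret P: prob_space "M n" by (rule P)
        show ?thesis using True B by (intro P.finite_measure_mono) auto
      next
        case False
        then show ?thesis by (simp add: measure_notin_sets)
      qed
      then show "norm (measure (M n) ?A - 0) < r" using B by simp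
    qed
  qed
qed

lemma cpr_const:
  assumes "a \<longlonglongrightarrow> c" "eventually (\<lambda>n. prob_space (M n)) sequentially"
  shows "cpr M (\<lambda>n \<omega>. a n) c"
  unfolding cpr_def
proof (intro allI impI)
  fix e d :: real assume e: "e > 0" and d: "d > 0"
  have "eventually (\<lambda>n. dist (a n) c < e) sequentially" using assms(1) e by (rule tendstoD)
  with assms(2) show "eventually (\<lambda>n. prob_space (M n) \<and>
      (\<exists>B\<in>sets (M n). {\<omega>\<in>space (M n). e < dist (a n) c} \<subseteq> B \<and> measure (M n) B < d)) sequentially"
    by eventually_elim (use d in \<open>auto intro!: bexI[of _ "{}"]\<close>)
qed

lemma cpr_le_gen:
  assumes Y: "cpr M Y d" and T: "cpr M T t" and r: "r > 0"
    and E: "(\<lambda>n. measure (M n) (E n)) \<longlonglongrightarrow> 0"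
    and ev: "eventually (\<lambda>n. E n \<in> sets (M n) \<and> (\<forall>\<omega>\<in>space (M n). dist (T n \<omega>) t < r \<longrightarrow> \<omega> \<notin> E n \<longrightarrow>
              dist (X n \<omega>) c \<le> dist (Y n \<omega>) d)) sequentially"
  shows "cpr M X c"
  unfolding cpr_def
proof (intro allI impI)
  fix e p :: real assume e: "e > 0" and p: "p > 0"
  have p3: "p/3 > 0" using p by simp
  have 1: "eventually (\<lambda>n. measure (M n) (E n) < p/3) sequentially"
    using order_tendstoD(2)[OF E p3] .
  have 2: "eventually (\<lambda>n. prob_space (M n) \<and>
      (\<exists>B\<in>sets (M n). {\<omega>\<in>space (M n). e < dist (Y n \<omega>) d} \<subseteq> B \<and> measure (M n) B < p/3)) sequentially"
    by (rule cprD[OF Y e p3])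
  have 3: "eventually (\<lambda>n. prob_space (M n) \<and>
      (\<exists>B\<in>sets (M n). {\<omega>\<in>space (M n). r/2 < dist (T n \<omega>) t} \<subseteq> B \<and> measure (M n) B < p/3)) sequentially"
    by (rule cprD[OF T _ p3]) (use r in simp)
  show "eventually (\<lambda>n. prob_space (M n) \<and>
      (\<exists>B\<in>sets (M n). {\<omega>\<in>space (M n). e < dist (X n \<omega>) c} \<subseteq> B \<and> measure (M n) B < p)) sequentially"
    using 1 2 3 ev
  proof eventually_elim
    case (elim n)
    then obtain B1 B2 where B1: "B1 \<in> sets (M n)" "{\<omega>\<in>space (M n). e < dist (Y n \<omega>) d} \<subseteq> B1" "measure (M n) B1 < p/3"
      and B2: "B2 \<in> sets (M n)" "{\<omega>\<in>space (M n). r/2 < dist (T n \<omega>) t} \<subseteq> B2" "measure (M n) B2 < p/3"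
      and P: "prob_space (M n)" by blast
    have En: "E n \<in> sets (M n)" using elim by blast
    have sub: "{\<omega>\<in>space (M n). e < dist (X n \<omega>) c} \<subseteq> B1 \<union> B2 \<union> E n"
    proof
      fix \<omega> assume w: "\<omega> \<in> {\<omega>\<in>space (M n). e < dist (X n \<omega>) c}"
      show "\<omega> \<in> B1 \<union> B2 \<union> E n"
      proof (cases "\<omega> \<in> B2 \<or> \<omega> \<in> E n")
        case False
        then have "dist (T n \<omega>) t < r" using B2 w r by force
        then have "dist (X n \<omega>) c \<le> dist (Y n \<omega>) d" using elim w False by blast
        then show ?thesis using w B1 by force
      qed auto
    qed
    have "measure (M n) (B1 \<union> B2 \<union> E n) \<le> measure (M n) (B1 \<union> B2) + measure (M n) (E n)"
      using B1 B2 En by (intro measure_Un_le) auto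
    also have "\<dots> \<le> measure (M n) B1 + measure (M n) B2 + measure (M n) (E n)"
      using B1 B2 measure_Un_le[of B1 "M n" B2] by simp
    also have "\<dots> < p" using B1 B2 elim by linarith
    finally show ?case using P sub B1 B2 En by blast
  qed
qed

lemma cpr_le:
  assumes Y: "cpr M Y d"
    and ev: "eventually (\<lambda>n. \<forall>\<omega>\<in>space (M n). dist (X n \<omega>) c \<le> dist (Y n \<omega>) d) sequentially"
  shows "cpr M X c"
  by (rule cpr_le_gen[OF Y Y zero_less_one, where E="\<lambda>n. {}"]) (use ev in \<open>auto elim!: eventually_mono\<close>)

lemma cpr_le_on:
  assumes Y: "cpr M Y d" and T: "cpr M T t" and r: "r > 0"
    and ev: "eventually (\<lambda>n. \<forall>\<omega>\<in>space (M n). dist (T n \<omega>) t < r \<longrightarrow>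
              dist (X n \<omega>) c \<le> dist (Y n \<omega>) d) sequentially"
  shows "cpr M X c"
  by (rule cpr_le_gen[OF Y T r, where E="\<lambda>n. {}"]) (use ev in \<open>auto elim!: eventually_mono\<close>)

lemma cpr_cont2:
  assumes X: "cpr M X a" and Y: "cpr M Y b"
    and f: "isCont (\<lambda>p. f (fst p) (snd p)) (a, b)"
  shows "cpr M (\<lambda>n \<omega>. f (X n \<omega>) (Y n \<omega>)) (f a b)"
  unfolding cpr_def
proof (intro allI impI)
  fix e p :: real assume e: "e > 0" and p: "p > 0"
  obtain \<delta> where \<delta>: "\<delta> > 0" "\<And>q. dist q (a,b) < \<delta> \<Longrightarrow> dist (f (fst q) (snd q)) (f a b) < e"
    using f e unfolding continuous_at_eps_delta by fastforce
  have p2: "p/2 > 0" using p by simp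
  have d3: "\<delta>/3 > 0" using \<delta> by simp
  show "eventually (\<lambda>n. prob_space (M n) \<and>
      (\<exists>B\<in>sets (M n). {\<omega>\<in>space (M n). e < dist (f (X n \<omega>) (Y n \<omega>)) (f a b)} \<subseteq> B \<and> measure (M n) B < p)) sequentially"
    using cprD[OF X d3 p2] cprD[OF Y d3 p2]
  proof eventually_elim
    case (elim n)
    then obtain B1 B2 where B1: "B1 \<in> sets (M n)" "{\<omega>\<in>space (M n). \<delta>/3 < dist (X n \<omega>) a} \<subseteq> B1" "measure (M n) B1 < p/2"
      and B2: "B2 \<in> sets (M n)" "{\<omega>\<in>space (M n). \<delta>/3 < dist (Y n \<omega>) b} \<subseteq> B2" "measure (M n) B2 < p/2"
      and P: "prob_space (M n)" by blast
    have sub: "{\<omega>\<in>space (M n). e < dist (f (X n \<omega>) (Y n \<omega>)) (f a b)} \<subseteq> B1 \<union> B2"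
    proof
      fix \<omega> assume w: "\<omega> \<in> {\<omega>\<in>space (M n). e < dist (f (X n \<omega>) (Y n \<omega>)) (f a b)}"
      show "\<omega> \<in> B1 \<union> B2"
      proof (rule ccontr)
        assume "\<omega> \<notin> B1 \<union> B2"
        then have h: "dist (X n \<omega>) a \<le> \<delta>/3" "dist (Y n \<omega>) b \<le> \<delta>/3" using w B1 B2 by force+
        have "dist (X n \<omega>, Y n \<omega>) (a,b) \<le> dist (X n \<omega>) a + dist (Y n \<omega>) b"
          unfolding dist_Pair_Pair by (rule sqrt_sum_squares_le_sum) auto
        also have "\<dots> < \<delta>" using h \<delta> by linarith
        finally have "dist (f (X n \<omega>) (Y n \<omega>)) (f a b) < e" using \<delta>(2)[of "(X n \<omega>, Y n \<omega>)"] by simp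
        then show False using w by simp
      qed
    qed
    have "measure (M n) (B1 \<union> B2) \<le> measure (M n) B1 + measure (M n) B2"
      using B1 B2 by (intro measure_Un_le) auto
    also have "\<dots> < p" using B1 B2 by linarith
    finally show ?case using P sub B1 B2 by blast
  qed
qed

lemma cpr_cont1:
  assumes X: "cpr M X a" and f: "isCont f a"
  shows "cpr M (\<lambda>n \<omega>. f (X n \<omega>)) (f a)"
proof -
  have "isCont (\<lambda>p. f (fst p)) (a, a)"
    using isCont_o2[OF isCont_fst[OF continuous_ident], where g=f and a="(a,a)"] f by simp
  then show ?thesis using cpr_cont2[OF X X, of "\<lambda>u v. f u"] by simp
qed

lemma (in prob_space) stdn:
  assumes D: "distributed M lborel W std_normal_density"
  shows stdn_rv: "random_variable borel W"
    and stdn_int: "integrable M (\<lambda>\<omega>. W \<omega> ^ k)"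
    and stdn_E1: "expectation W = 0"
    and stdn_E2: "expectation (\<lambda>\<omega>. (W \<omega>)^2) = 1"
    and stdn_E4: "expectation (\<lambda>\<omega>. (W \<omega>)^4) = 3"
proof -
  show rv: "random_variable borel W" using distributed_measurable[OF D] by simp
  show "integrable M (\<lambda>\<omega>. W \<omega> ^ k)"
    using distributed_integrable[OF D, of "\<lambda>x. x^k"] integrable_std_normal_moment[of k] by simp
  show "expectation W = 0" using standard_normal_distributed_expectation[OF D] .
  have "expectation (\<lambda>\<omega>. (W \<omega>)^(2*1)) = fact (2 * 1) / (2^1 * fact 1)"
    using distributed_integral[OF D, of "\<lambda>x. x^(2*1)"] integral_std_normal_moment_even[of 1] by simp
  then show "expectation (\<lambda>\<omega>. (W \<omega>)^2) = 1" by simp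
  have "expectation (\<lambda>\<omega>. (W \<omega>)^(2*2)) = fact (2 * 2) / (2^2 * fact 2)"
    using distributed_integral[OF D, of "\<lambda>x. x^(2*2)"] integral_std_normal_moment_even[of 2] by simp
  then show "expectation (\<lambda>\<omega>. (W \<omega>)^4) = 3" by (simp add: fact_numeral)
qed

lemma (in prob_space) wlln:
  fixes X :: "'i \<Rightarrow> 'a \<Rightarrow> real"
  assumes I: "finite I" and ind: "indep_vars (\<lambda>_. borel) X I"
    and sq: "\<And>i. i \<in> I \<Longrightarrow> integrable M (\<lambda>\<omega>. (X i \<omega>)^2)" and t: "t > 0"
  shows "prob {\<omega>\<in>space M. t \<le> \<bar>(\<Sum>i\<in>I. X i \<omega>) - (\<Sum>i\<in>I. expectation (X i))\<bar>}
           \<le> (\<Sum>i\<in>I. variance (X i)) / t^2"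
proof -
  have rv: "\<And>i. i\<in>I \<Longrightarrow> random_variable borel (X i)" using ind unfolding indep_vars_def by blast
  have int: "\<And>i. i\<in>I \<Longrightarrow> integrable M (X i)"
    using sq rv square_integrable_imp_integrable by blast
  define m where "m i = expectation (X i)" for i
  define Y where "Y i \<omega> = X i \<omega> - m i" for i \<omega>
  have indY: "indep_vars (\<lambda>_. borel) Y I" unfolding Y_def
    by (rule indep_vars_compose2[OF ind, where Y="\<lambda>i v. v - m i", simplified]) auto
  have intY: "\<And>i. i\<in>I \<Longrightarrow> integrable M (Y i)" unfolding Y_def using int by auto
  have intY2: "\<And>i. i\<in>I \<Longrightarrow> integrable M (\<lambda>\<omega>. Y i \<omega> * Y i \<omega>)"
  proof -
    fix i assume i: "i \<in> I"
    have "(\<lambda>\<omega>. Y i \<omega> * Y i \<omega>) = (\<lambda>\<omega>. (X i \<omega>)^2 - 2 * m i * X i \<omega> + (m i)^2)"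
      unfolding Y_def by (auto simp: power2_eq_square algebra_simps)
    then show "integrable M (\<lambda>\<omega>. Y i \<omega> * Y i \<omega>)" using sq[OF i] int[OF i] by simp
  qed
  have EY: "\<And>i. i\<in>I \<Longrightarrow> expectation (Y i) = 0"
    unfolding Y_def m_def using int by (simp add: prob_space)
  have prodint: "\<And>i j. i\<in>I \<Longrightarrow> j\<in>I \<Longrightarrow> integrable M (\<lambda>\<omega>. Y i \<omega> * Y j \<omega>)"
  proof -
    fix i j assume ij: "i\<in>I" "j\<in>I"
    show "integrable M (\<lambda>\<omega>. Y i \<omega> * Y j \<omega>)"
    proof (cases "i = j")
      case True then show ?thesis using intY2 ij by simp
    next
      case False
      have "indep_vars (\<lambda>_. borel) Y {i,j}" by (rule indep_vars_subset[OF indY]) (use ij in auto)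
      then have "integrable M (\<lambda>\<omega>. \<Prod>k\<in>{i,j}. Y k \<omega>)"
        using intY ij by (intro indep_vars_integrable) auto
      then show ?thesis using False by simp
    qed
  qed
  have prodE: "\<And>i j. i\<in>I \<Longrightarrow> j\<in>I \<Longrightarrow> i \<noteq> j \<Longrightarrow> expectation (\<lambda>\<omega>. Y i \<omega> * Y j \<omega>) = 0"
  proof -
    fix i j assume ij: "i\<in>I" "j\<in>I" "i \<noteq> j"
    have "indep_vars (\<lambda>_. borel) Y {i,j}" by (rule indep_vars_subset[OF indY]) (use ij in auto)
    then have "expectation (\<lambda>\<omega>. \<Prod>k\<in>{i,j}. Y k \<omega>) = (\<Prod>k\<in>{i,j}. expectation (Y k))"
      using intY ij by (intro indep_vars_lebesgue_integral) auto
    then show "expectation (\<lambda>\<omega>. Y i \<omega> * Y j \<omega>) = 0" using ij EY by simp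
  qed
  define f where "f \<omega> = (\<Sum>i\<in>I. Y i \<omega>)" for \<omega>
  have f_eq: "\<And>\<omega>. f \<omega> = (\<Sum>i\<in>I. X i \<omega>) - (\<Sum>i\<in>I. expectation (X i))"
    unfolding f_def Y_def m_def by (simp add: sum_subtractf)
  have frv: "random_variable borel f" unfolding f_def Y_def using rv by auto
  have f2: "\<And>\<omega>. (f \<omega>)^2 = (\<Sum>i\<in>I. \<Sum>j\<in>I. Y i \<omega> * Y j \<omega>)"
    unfolding f_def power2_eq_square sum_product ..
  have f2int: "integrable M (\<lambda>\<omega>. (f \<omega>)^2)"
    unfolding f2 using prodint by (intro Bochner_Integration.integrable_sum) auto
  have Ef: "expectation f = 0" unfolding f_def
    using intY EY by (subst Bochner_Integration.integral_sum) auto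
  have "variance f = expectation (\<lambda>\<omega>. (f \<omega>)^2)" using Ef by simp
  also have "\<dots> = (\<Sum>i\<in>I. \<Sum>j\<in>I. expectation (\<lambda>\<omega>. Y i \<omega> * Y j \<omega>))"
    unfolding f2 using prodint by (simp add: Bochner_Integration.integral_sum Bochner_Integration.integrable_sum)
  also have "\<dots> = (\<Sum>i\<in>I. expectation (\<lambda>\<omega>. Y i \<omega> * Y i \<omega>))"
  proof (rule sum.cong[OF refl])
    fix i assume i: "i \<in> I"
    have "(\<Sum>j\<in>I. expectation (\<lambda>\<omega>. Y i \<omega> * Y j \<omega>)) =
          (\<Sum>j\<in>I. if j = i then expectation (\<lambda>\<omega>. Y i \<omega> * Y i \<omega>) else 0)"
      using prodE i by (intro sum.cong) auto
    also have "\<dots> = expectation (\<lambda>\<omega>. Y i \<omega> * Y i \<omega>)" using I i by simp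
    finally show "(\<Sum>j\<in>I. expectation (\<lambda>\<omega>. Y i \<omega> * Y j \<omega>)) = expectation (\<lambda>\<omega>. Y i \<omega> * Y i \<omega>)" .
  qed
  also have "\<dots> = (\<Sum>i\<in>I. variance (X i))"
    unfolding Y_def m_def by (simp add: power2_eq_square)
  finally have vf: "variance f = (\<Sum>i\<in>I. variance (X i))" .
  have "prob {\<omega>\<in>space M. \<bar>f \<omega> - expectation f\<bar> \<ge> t} \<le> variance f / t^2"
    by (rule Chebyshev_inequality[OF frv f2int t])
  then show ?thesis using Ef vf f_eq by simp
qed

lemma lln_step:
  fixes F :: "'k \<Rightarrow> 'a \<Rightarrow> real" and g :: "nat \<Rightarrow> 'k" and c \<mu> :: "nat \<Rightarrow> real" and \<sigma> t :: real
  assumes P: "prob_space M" and inj: "inj g"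
    and ind: "prob_space.indep_vars M (\<lambda>_. borel) F (g ` {..<n})"
    and D: "\<And>i. i < n \<Longrightarrow> distributed M lborel (\<lambda>\<omega>. (F (g i) \<omega> - \<mu> i) / \<sigma>) std_normal_density"
    and t: "t > 0"
  shows lln_lin: "measure M {\<omega>\<in>space M. t \<le> \<bar>(\<Sum>i<n. c i * ((F (g i) \<omega> - \<mu> i)/\<sigma>)) - 0\<bar>}
            \<le> (\<Sum>i<n. (c i)^2) / t^2"
    and lln_sq: "measure M {\<omega>\<in>space M. t \<le> \<bar>(\<Sum>i<n. ((F (g i) \<omega> - \<mu> i)/\<sigma>)^2) - real n\<bar>}
            \<le> 2 * real n / t^2"
proof -
  interpret prob_space M by (rule P)
  define h where "h = inv g"
  have hg: "\<And>i. h (g i) = i" unfolding h_def using inj by (simp add: inv_f_f)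
  have injon: "inj_on g {..<n}" using inj by (rule inj_on_subset) auto
  define e where "e i \<omega> = (F (g i) \<omega> - \<mu> i) / \<sigma>" for i \<omega>
  have De: "\<And>i. i < n \<Longrightarrow> distributed M lborel (e i) std_normal_density"
    unfolding e_def using D by simp
  define X where "X k \<omega> = c (h k) * ((F k \<omega> - \<mu> (h k)) / \<sigma>)" for k \<omega>
  have indX: "indep_vars (\<lambda>_. borel) X (g ` {..<n})" unfolding X_def
    using indep_vars_compose2[OF ind, of "\<lambda>k v. c (h k) * ((v - \<mu> (h k)) / \<sigma>)" "\<lambda>_. borel"] by simp
  have Xg: "\<And>i \<omega>. X (g i) \<omega> = c i * e i \<omega>" unfolding X_def e_def hg ..
  have sqX: "\<And>k. k \<in> g ` {..<n} \<Longrightarrow> integrable M (\<lambda>\<omega>. (X k \<omega>)^2)"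
  proof -
    fix k assume "k \<in> g ` {..<n}"
    then obtain i where i: "i < n" "k = g i" by auto
    have "integrable M (\<lambda>\<omega>. (c i)^2 * (e i \<omega>)^2)" using stdn_int[OF De[OF i(1)], of 2] by simp
    then show "integrable M (\<lambda>\<omega>. (X k \<omega>)^2)" using i by (simp add: Xg power_mult_distrib)
  qed
  have EX: "\<And>i. i < n \<Longrightarrow> expectation (X (g i)) = 0"
    unfolding Xg using stdn_E1[OF De] by simp
  have VX: "\<And>i. i < n \<Longrightarrow> variance (X (g i)) = (c i)^2"
  proof -
    fix i assume i: "i < n"
    have "variance (X (g i)) = expectation (\<lambda>\<omega>. (c i)^2 * (e i \<omega>)^2)"
      using EX[OF i] by (simp add: Xg power_mult_distrib)
    also have "\<dots> = (c i)^2" using stdn_E2[OF De[OF i]] by simp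
    finally show "variance (X (g i)) = (c i)^2" .
  qed
  have "prob {\<omega>\<in>space M. t \<le> \<bar>(\<Sum>k\<in>g ` {..<n}. X k \<omega>) - (\<Sum>k\<in>g ` {..<n}. expectation (X k))\<bar>}
           \<le> (\<Sum>k\<in>g ` {..<n}. variance (X k)) / t^2"
    by (rule wlln[OF _ indX sqX t]) auto
  moreover have "\<And>\<omega>. (\<Sum>k\<in>g ` {..<n}. X k \<omega>) = (\<Sum>i<n. c i * e i \<omega>)"
    by (simp add: sum.reindex[OF injon] Xg)
  moreover have "(\<Sum>k\<in>g ` {..<n}. expectation (X k)) = 0"
    by (simp add: sum.reindex[OF injon] EX)
  moreover have "(\<Sum>k\<in>g ` {..<n}. variance (X k)) = (\<Sum>i<n. (c i)^2)"
    by (simp add: sum.reindex[OF injon] VX)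
  ultimately show "measure M {\<omega>\<in>space M. t \<le> \<bar>(\<Sum>i<n. c i * ((F (g i) \<omega> - \<mu> i)/\<sigma>)) - 0\<bar>}
            \<le> (\<Sum>i<n. (c i)^2) / t^2"
      unfolding e_def by simp
next
  interpret prob_space M by (rule P)
  define h where "h = inv g"
  have hg: "\<And>i. h (g i) = i" unfolding h_def using inj by (simp add: inv_f_f)
  have injon: "inj_on g {..<n}" using inj by (rule inj_on_subset) auto
  define e where "e i \<omega> = (F (g i) \<omega> - \<mu> i) / \<sigma>" for i \<omega>
  have De: "\<And>i. i < n \<Longrightarrow> distributed M lborel (e i) std_normal_density"
    unfolding e_def using D by simp
  define X where "X k \<omega> = ((F k \<omega> - \<mu> (h k)) / \<sigma>)^2" for k \<omega>
  have indX: "indep_vars (\<lambda>_. borel) X (g ` {..<n})" unfolding X_def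
    using indep_vars_compose2[OF ind, of "\<lambda>k v. ((v - \<mu> (h k)) / \<sigma>)^2" "\<lambda>_. borel"] by simp
  have Xg: "\<And>i \<omega>. X (g i) \<omega> = (e i \<omega>)^2" unfolding X_def e_def hg ..
  have sqX: "\<And>k. k \<in> g ` {..<n} \<Longrightarrow> integrable M (\<lambda>\<omega>. (X k \<omega>)^2)"
  proof -
    fix k assume "k \<in> g ` {..<n}"
    then obtain i where i: "i < n" "k = g i" by auto
    have "integrable M (\<lambda>\<omega>. (e i \<omega>)^4)" using stdn_int[OF De[OF i(1)], of 4] by simp
    then show "integrable M (\<lambda>\<omega>. (X k \<omega>)^2)" using i by (simp add: Xg flip: power_mult)
  qed
  have EX: "\<And>i. i < n \<Longrightarrow> expectation (X (g i)) = 1"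
    unfolding Xg using stdn_E2[OF De] by simp
  have VX: "\<And>i. i < n \<Longrightarrow> variance (X (g i)) = 2"
  proof -
    fix i assume i: "i < n"
    have eq: "(\<lambda>\<omega>. (X (g i) \<omega> - expectation (X (g i)))\<^sup>2) = (\<lambda>\<omega>. (e i \<omega>)^4 - 2 * (e i \<omega>)^2 + 1)"
      using EX[OF i] by (auto simp: Xg power2_eq_square power4_eq_xxxx algebra_simps)
    have "variance (X (g i)) = expectation (\<lambda>\<omega>. (e i \<omega>)^4 - 2 * (e i \<omega>)^2 + 1)"
      unfolding eq ..
    also have "\<dots> = 3 - 2 * 1 + 1"
      using stdn_E2[OF De[OF i]] stdn_E4[OF De[OF i]] stdn_int[OF De[OF i], of 4] stdn_int[OF De[OF i], of 2]
      by (simp add: prob_space)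
    finally show "variance (X (g i)) = 2" by simp
  qed
  have "prob {\<omega>\<in>space M. t \<le> \<bar>(\<Sum>k\<in>g ` {..<n}. X k \<omega>) - (\<Sum>k\<in>g ` {..<n}. expectation (X k))\<bar>}
           \<le> (\<Sum>k\<in>g ` {..<n}. variance (X k)) / t^2"
    by (rule wlln[OF _ indX sqX t]) auto
  moreover have "\<And>\<omega>. (\<Sum>k\<in>g ` {..<n}. X k \<omega>) = (\<Sum>i<n. (e i \<omega>)^2)"
    by (simp add: sum.reindex[OF injon] Xg)
  moreover have "(\<Sum>k\<in>g ` {..<n}. expectation (X k)) = real n"
    by (simp add: sum.reindex[OF injon] EX)
  moreover have "(\<Sum>k\<in>g ` {..<n}. variance (X k)) = 2 * real n"
    by (simp add: sum.reindex[OF injon] VX)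
  ultimately show "measure M {\<omega>\<in>space M. t \<le> \<bar>(\<Sum>i<n. ((F (g i) \<omega> - \<mu> i)/\<sigma>)^2) - real n\<bar>}
            \<le> 2 * real n / t^2"
      unfolding e_def by simp
qed

lemma cpr_prob: "cpr M X c \<Longrightarrow> eventually (\<lambda>n. prob_space (M n)) sequentially"
  using cprD[of M X c 1 1] by (auto elim: eventually_mono)

lemma cpr_eq_on:
  assumes "cpr M Y c" "cpr M T t" "r > 0"
    and "eventually (\<lambda>n. \<forall>\<omega>\<in>space (M n). dist (T n \<omega>) t < r \<longrightarrow> X n \<omega> = Y n \<omega>) sequentially"
  shows "cpr M X c"
  by (rule cpr_le_on[OF assms(1-3)]) (use assms(4) in \<open>auto elim!: eventually_mono\<close>)

lemma cpr_eq:
  assumes "cpr M Y c" "\<And>n \<omega>. X n \<omega> = Y n \<omega>"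
  shows "cpr M X c"
  by (rule cpr_le[OF assms(1)]) (use assms(2) in auto)

lemma cpr_eq_lim: "cpr M X c \<Longrightarrow> c = d \<Longrightarrow> cpr M X d" by simp

lemma cpr_add:
  fixes X Y :: "nat \<Rightarrow> 'a \<Rightarrow> real"
  shows "cpr M X a \<Longrightarrow> cpr M Y b \<Longrightarrow> cpr M (\<lambda>n \<omega>. X n \<omega> + Y n \<omega>) (a + b)"
  by (rule cpr_cont2[where f="(+)"]) (auto intro!: continuous_intros)
lemma cpr_diff:
  fixes X Y :: "nat \<Rightarrow> 'a \<Rightarrow> real"
  shows "cpr M X a \<Longrightarrow> cpr M Y b \<Longrightarrow> cpr M (\<lambda>n \<omega>. X n \<omega> - Y n \<omega>) (a - b)"
  by (rule cpr_cont2[where f="(-)"]) (auto intro!: continuous_intros)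
lemma cpr_mult:
  fixes X Y :: "nat \<Rightarrow> 'a \<Rightarrow> real"
  shows "cpr M X a \<Longrightarrow> cpr M Y b \<Longrightarrow> cpr M (\<lambda>n \<omega>. X n \<omega> * Y n \<omega>) (a * b)"
  by (rule cpr_cont2[where f="(*)"]) (auto intro!: continuous_intros)
lemma cpr_divide:
  fixes X Y :: "nat \<Rightarrow> 'a \<Rightarrow> real"
  shows "cpr M X a \<Longrightarrow> cpr M Y b \<Longrightarrow> b \<noteq> 0 \<Longrightarrow> cpr M (\<lambda>n \<omega>. X n \<omega> / Y n \<omega>) (a / b)"
  by (rule cpr_cont2[where f="(/)"]) (auto intro!: continuous_intros)
lemma cpr_pair:
  "cpr M X a \<Longrightarrow> cpr M Y b \<Longrightarrow> cpr M (\<lambda>n \<omega>. (X n \<omega>, Y n \<omega>)) (a, b)"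
  by (rule cpr_cont2[where f="Pair"]) (auto intro!: continuous_intros)
lemma cpr_sqrt:
  fixes X :: "nat \<Rightarrow> 'a \<Rightarrow> real"
  shows "cpr M X a \<Longrightarrow> cpr M (\<lambda>n \<omega>. sqrt (X n \<omega>)) (sqrt a)"
  by (rule cpr_cont1[where f=sqrt]) (auto intro!: continuous_intros)
lemma cpr_abs:
  fixes X :: "nat \<Rightarrow> 'a \<Rightarrow> real"
  shows "cpr M X a \<Longrightarrow> cpr M (\<lambda>n \<omega>. \<bar>X n \<omega>\<bar>) \<bar>a\<bar>"
  by (rule cpr_cont1[where f=abs]) (auto intro!: continuous_intros)
lemma cpr_cconst:
  "cpr M X a \<Longrightarrow> cpr M (\<lambda>n \<omega>. k) k"
  by (rule cpr_const[OF tendsto_const cpr_prob])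

definition close :: "(nat \<Rightarrow> 'a measure) \<Rightarrow> (nat \<Rightarrow> 'a \<Rightarrow> real) \<Rightarrow> (nat \<Rightarrow> 'a \<Rightarrow> real) \<Rightarrow> bool" where
  "close M A B \<longleftrightarrow> cpr M (\<lambda>n \<omega>. sqrt (real n) * (A n \<omega> - B n \<omega>)) 0"

definition close2 :: "(nat \<Rightarrow> 'a measure) \<Rightarrow> (nat \<Rightarrow> 'a \<Rightarrow> real) \<Rightarrow> (nat \<Rightarrow> 'a \<Rightarrow> real) \<Rightarrow> real \<Rightarrow> bool" where
  "close2 M A B a \<longleftrightarrow> close M A B \<and> cpr M A a \<and> cpr M B a"

lemma close_cpr:
  assumes C: "close M A B" and B: "cpr M B a"
  shows "cpr M A a"
proof -
  have "cpr M (\<lambda>n \<omega>. A n \<omega> - B n \<omega>) 0"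
  proof (rule cpr_le[OF C[unfolded close_def]])
    show "\<forall>\<^sub>F n in sequentially. \<forall>\<omega>\<in>space (M n). dist (A n \<omega> - B n \<omega>) 0 \<le> dist (sqrt (real n) * (A n \<omega> - B n \<omega>)) 0"
      using eventually_ge_at_top[of "1::nat"]
    proof eventually_elim
      case (elim n)
      then have "1 \<le> sqrt (real n)" by simp
      then show ?case using mult_right_mono[OF \<open>1 \<le> sqrt (real n)\<close>, of "\<bar>A n _ - B n _\<bar>"]
        by (auto simp: dist_real_def abs_mult)
    qed
  qed
  from cpr_add[OF this B] show ?thesis by simp
qed

lemma close2I: "close M A B \<Longrightarrow> cpr M B a \<Longrightarrow> close2 M A B a"
  unfolding close2_def using close_cpr by blast

lemma close2_const: "cpr M X a \<Longrightarrow> close2 M (\<lambda>n \<omega>. k) (\<lambda>n \<omega>. k) k"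
  unfolding close2_def close_def using cpr_cconst[of M X a k] cpr_cconst[of M X a 0] by simp

lemma close2_add:
  assumes "close2 M A B a" "close2 M C D c"
  shows "close2 M (\<lambda>n \<omega>. A n \<omega> + C n \<omega>) (\<lambda>n \<omega>. B n \<omega> + D n \<omega>) (a + c)"
proof -
  have "cpr M (\<lambda>n \<omega>. sqrt (real n) * (A n \<omega> - B n \<omega>) + sqrt (real n) * (C n \<omega> - D n \<omega>)) (0 + 0)"
    using assms unfolding close2_def close_def by (intro cpr_add) auto
  from this[simplified] have "close M (\<lambda>n \<omega>. A n \<omega> + C n \<omega>) (\<lambda>n \<omega>. B n \<omega> + D n \<omega>)"
    unfolding close_def by (rule cpr_eq) (auto simp: algebra_simps)
  then show ?thesis using assms unfolding close2_def by (auto intro: cpr_add)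
qed

lemma close2_diff:
  assumes "close2 M A B a" "close2 M C D c"
  shows "close2 M (\<lambda>n \<omega>. A n \<omega> - C n \<omega>) (\<lambda>n \<omega>. B n \<omega> - D n \<omega>) (a - c)"
proof -
  have "cpr M (\<lambda>n \<omega>. sqrt (real n) * (A n \<omega> - B n \<omega>) - sqrt (real n) * (C n \<omega> - D n \<omega>)) (0 - 0)"
    using assms unfolding close2_def close_def by (intro cpr_diff) auto
  from this[simplified] have "close M (\<lambda>n \<omega>. A n \<omega> - C n \<omega>) (\<lambda>n \<omega>. B n \<omega> - D n \<omega>)"
    unfolding close_def by (rule cpr_eq) (auto simp: algebra_simps)
  then show ?thesis using assms unfolding close2_def by (auto intro: cpr_diff)
qed

lemma close2_mult:
  assumes "close2 M A B a" "close2 M C D c"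
  shows "close2 M (\<lambda>n \<omega>. A n \<omega> * C n \<omega>) (\<lambda>n \<omega>. B n \<omega> * D n \<omega>) (a * c)"
proof -
  have "cpr M (\<lambda>n \<omega>. sqrt (real n) * (A n \<omega> - B n \<omega>) * C n \<omega> + B n \<omega> * (sqrt (real n) * (C n \<omega> - D n \<omega>))) (0 * c + a * 0)"
    using assms unfolding close2_def close_def by (intro cpr_add cpr_mult) auto
  from this[simplified] have "close M (\<lambda>n \<omega>. A n \<omega> * C n \<omega>) (\<lambda>n \<omega>. B n \<omega> * D n \<omega>)"
    unfolding close_def by (rule cpr_eq) (auto simp: algebra_simps)
  then show ?thesis using assms unfolding close2_def by (auto intro: cpr_mult)
qed

lemma close2_inv:
  assumes C: "close2 M A B a" and a: "a \<noteq> 0"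
  shows "close2 M (\<lambda>n \<omega>. 1 / A n \<omega>) (\<lambda>n \<omega>. 1 / B n \<omega>) (1 / a)"
proof -
  have cA: "cpr M A a" and cB: "cpr M B a" and cl: "close M A B" using C unfolding close2_def by auto
  have r: "cpr M (\<lambda>n \<omega>. - (sqrt (real n) * (A n \<omega> - B n \<omega>)) / (A n \<omega> * B n \<omega>)) (- 0 / (a * a))"
    using cl cA cB a unfolding close_def by (intro cpr_divide cpr_mult cpr_cont1[where f=uminus]) (auto intro!: continuous_intros)
  have "close M (\<lambda>n \<omega>. 1 / A n \<omega>) (\<lambda>n \<omega>. 1 / B n \<omega>)"
    unfolding close_def
  proof (rule cpr_eq_on[OF _ cpr_pair[OF cA cB]])
    show "cpr M (\<lambda>n \<omega>. - (sqrt (real n) * (A n \<omega> - B n \<omega>)) / (A n \<omega> * B n \<omega>)) 0" using r by simp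
    show "\<bar>a\<bar> / 2 > 0" using a by simp
    show "\<forall>\<^sub>F n in sequentially. \<forall>\<omega>\<in>space (M n). dist (A n \<omega>, B n \<omega>) (a, a) < \<bar>a\<bar> / 2 \<longrightarrow>
        sqrt (real n) * (1 / A n \<omega> - 1 / B n \<omega>) = - (sqrt (real n) * (A n \<omega> - B n \<omega>)) / (A n \<omega> * B n \<omega>)"
    proof (intro always_eventually allI ballI impI)
      fix n \<omega> assume d: "dist (A n \<omega>, B n \<omega>) (a, a) < \<bar>a\<bar> / 2"
      have "dist (A n \<omega>) a < \<bar>a\<bar>/2" "dist (B n \<omega>) a < \<bar>a\<bar>/2"
        using d dist_fst_le[of "(A n \<omega>, B n \<omega>)" "(a,a)"] dist_snd_le[of "(A n \<omega>, B n \<omega>)" "(a,a)"] by auto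
      then have "A n \<omega> \<noteq> 0" "B n \<omega> \<noteq> 0" by (auto simp: dist_real_def)
      then show "sqrt (real n) * (1 / A n \<omega> - 1 / B n \<omega>) = - (sqrt (real n) * (A n \<omega> - B n \<omega>)) / (A n \<omega> * B n \<omega>)"
        by (simp add: field_simps)
    qed
  qed
  moreover have "cpr M (\<lambda>n \<omega>. 1 / B n \<omega>) (1 / a)"
    using cB a by (intro cpr_divide cpr_cconst[OF cB]) auto
  ultimately show ?thesis by (rule close2I)
qed

lemma close2_sqrt:
  assumes C: "close2 M A B a" and a: "a > 0"
  shows "close2 M (\<lambda>n \<omega>. sqrt (A n \<omega>)) (\<lambda>n \<omega>. sqrt (B n \<omega>)) (sqrt a)"
proof -
  have cA: "cpr M A a" and cB: "cpr M B a" and cl: "close M A B" using C unfolding close2_def by auto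
  have r: "cpr M (\<lambda>n \<omega>. (sqrt (real n) * (A n \<omega> - B n \<omega>)) / (sqrt (A n \<omega>) + sqrt (B n \<omega>))) (0 / (sqrt a + sqrt a))"
    using cl cA cB a unfolding close_def by (intro cpr_divide cpr_add cpr_sqrt) auto
  have "close M (\<lambda>n \<omega>. sqrt (A n \<omega>)) (\<lambda>n \<omega>. sqrt (B n \<omega>))"
    unfolding close_def
  proof (rule cpr_eq_on[OF _ cpr_pair[OF cA cB]])
    show "cpr M (\<lambda>n \<omega>. (sqrt (real n) * (A n \<omega> - B n \<omega>)) / (sqrt (A n \<omega>) + sqrt (B n \<omega>))) 0" using r by simp
    show "a / 2 > 0" using a by simp
    show "\<forall>\<^sub>F n in sequentially. \<forall>\<omega>\<in>space (M n). dist (A n \<omega>, B n \<omega>) (a, a) < a / 2 \<longrightarrow>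
        sqrt (real n) * (sqrt (A n \<omega>) - sqrt (B n \<omega>)) = (sqrt (real n) * (A n \<omega> - B n \<omega>)) / (sqrt (A n \<omega>) + sqrt (B n \<omega>))"
    proof (intro always_eventually allI ballI impI)
      fix n \<omega> assume d: "dist (A n \<omega>, B n \<omega>) (a, a) < a / 2"
      have "dist (A n \<omega>) a < a/2" "dist (B n \<omega>) a < a/2"
        using d dist_fst_le[of "(A n \<omega>, B n \<omega>)" "(a,a)"] dist_snd_le[of "(A n \<omega>, B n \<omega>)" "(a,a)"] by auto
      then have p: "A n \<omega> > 0" "B n \<omega> > 0" unfolding dist_real_def by linarith+
      then have s: "sqrt (A n \<omega>) + sqrt (B n \<omega>) > 0" by (simp add: add_pos_pos)
      have "(sqrt (A n \<omega>) - sqrt (B n \<omega>)) * (sqrt (A n \<omega>) + sqrt (B n \<omega>)) = A n \<omega> - B n \<omega>"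
        using p by (simp add: algebra_simps)
      then have "sqrt (A n \<omega>) - sqrt (B n \<omega>) = (A n \<omega> - B n \<omega>) / (sqrt (A n \<omega>) + sqrt (B n \<omega>))"
        using s by (simp add: eq_divide_eq)
      then show "sqrt (real n) * (sqrt (A n \<omega>) - sqrt (B n \<omega>)) = (sqrt (real n) * (A n \<omega> - B n \<omega>)) / (sqrt (A n \<omega>) + sqrt (B n \<omega>))"
        by simp
    qed
  qed
  moreover have "cpr M (\<lambda>n \<omega>. sqrt (B n \<omega>)) (sqrt a)" using cB by (rule cpr_sqrt)
  ultimately show ?thesis by (rule close2I)
qed

lemma quad_pos:
  fixes P Q R v1 v2 :: real
  assumes "P > 0" "P * R - Q^2 > 0" "v1 \<noteq> 0 \<or> v2 \<noteq> 0"
  shows "P * v1^2 + 2 * Q * v1 * v2 + R * v2^2 > 0"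
proof -
  have eq: "P * (P * v1^2 + 2 * Q * v1 * v2 + R * v2^2) = (P * v1 + Q * v2)^2 + (P * R - Q^2) * v2^2"
    by (simp add: power2_eq_square algebra_simps)
  have "(P * v1 + Q * v2)^2 + (P * R - Q^2) * v2^2 > 0"
  proof (cases "v2 = 0")
    case True
    then have "v1 \<noteq> 0" using assms by auto
    then show ?thesis using True assms by simp
  next
    case False
    then have "(P * R - Q^2) * v2^2 > 0" using assms by simp
    then show ?thesis by (smt (verit) zero_le_power2)
  qed
  then have "P * (P * v1^2 + 2 * Q * v1 * v2 + R * v2^2) > 0" using eq by simp
  then show ?thesis using assms(1) by (simp add: zero_less_mult_iff)
qed

lemma mat2_eq_iff:
  fixes S :: "real^2^2"
  shows "S = vector[vector[a,b],vector[c,d]] \<longleftrightarrow> S$1$1 = a \<and> S$1$2 = b \<and> S$2$1 = c \<and> S$2$2 = d"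
  by (auto simp: vec_eq_iff forall_2)

lemma mat2_mult_nth:
  fixes S T :: "real^2^2"
  shows "(S ** T)$i$j = S$i$1 * T$1$j + S$i$2 * T$2$j"
  by (simp add: matrix_matrix_mult_def sum_2)

lemma mat2_quad:
  fixes S :: "real^2^2" and v :: "real^2"
  shows "v \<bullet> (S *v v) = v$1 * (S$1$1 * v$1 + S$1$2 * v$2) + v$2 * (S$2$1 * v$1 + S$2$2 * v$2)"
  by (simp add: inner_vec_def matrix_vector_mult_def sum_2)

lemma pd_sqrt_2:
  fixes m a s t :: real
  assumes pos: "a - m^2 > 0"
    and s_def: "s = sqrt (a - m^2)" and t_def: "t = sqrt (a + 1 + 2 * s)"
  shows "pd_sqrt (vector[vector[1,m], vector[m,a]]) = vector[vector[(1+s)/t, m/t], vector[m/t, (a+s)/t]]"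
proof -
  have s0: "s > 0" unfolding s_def using pos by simp
  have ss: "s^2 = a - m^2" unfolding s_def using pos by simp
  have a0: "a > 0" using pos by (smt (verit) zero_le_power2)
  have tt: "t^2 = a + 1 + 2 * s" unfolding t_def using s0 a0 by simp
  have t0: "t > 0" unfolding t_def using s0 a0 by simp
  let ?A = "vector[vector[1,m], vector[m,a]] :: real^2^2"
  let ?S = "vector[vector[(1+s)/t, m/t], vector[m/t, (a+s)/t]] :: real^2^2"
  let ?P = "\<lambda>S::real^2^2. transpose S = S \<and> (\<forall>v. v \<noteq> 0 \<longrightarrow> v \<bullet> (S *v v) > 0) \<and> S ** S = ?A"
  have PS: "?P ?S"
  proof (intro conjI allI impI)
    show "transpose ?S = ?S" by (simp add: vec_eq_iff forall_2 transpose_def)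
  next
    fix v :: "real^2" assume v: "v \<noteq> 0"
    then have v': "v$1 \<noteq> 0 \<or> v$2 \<noteq> 0" by (auto simp: vec_eq_iff forall_2)
    have d: "((1+s)/t) * ((a+s)/t) - (m/t)^2 > 0"
    proof -
      have "(1+s)*(a+s) - m^2 = s * t^2" using ss tt by (simp add: algebra_simps power2_eq_square)
      then have "((1+s)/t) * ((a+s)/t) - (m/t)^2 = s" using t0
        by (simp add: field_simps power2_eq_square)
      then show ?thesis using s0 by simp
    qed
    have "(1+s)/t > 0" using s0 t0 by simp
    from quad_pos[OF this d v']
    show "v \<bullet> (?S *v v) > 0" unfolding mat2_quad by (simp add: power2_eq_square algebra_simps)
  next
    have e1: "((1+s)/t)^2 + (m/t)^2 = 1"
    proof -
      have "(1+s)^2 + m^2 = t^2" using ss tt by (simp add: power2_eq_square algebra_simps)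
      then show ?thesis using t0 by (simp add: field_simps power2_eq_square)
    qed
    have e2: "((1+s)/t) * (m/t) + (m/t) * ((a+s)/t) = m"
    proof -
      have h: "(1+s)*m + m*(a+s) = m * t^2" using tt by (simp add: algebra_simps)
      have "((1+s)/t) * (m/t) + (m/t) * ((a+s)/t) = ((1+s)*m + m*(a+s)) / (t*t)"
        by (simp only: times_divide_times_eq add_divide_distrib[symmetric])
      also have "\<dots> = ((1+s)*m + m*(a+s)) / t^2" by (simp add: power2_eq_square)
      also have "\<dots> = m" using h t0 by simp
      finally show ?thesis .
    qed
    have e3: "(m/t)^2 + ((a+s)/t)^2 = a"
    proof -
      have "m^2 + (a+s)^2 = a * t^2" using ss tt by (simp add: power2_eq_square algebra_simps)
      then show ?thesis using t0 by (simp add: field_simps power2_eq_square)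
    qed
    show "?S ** ?S = ?A" unfolding mat2_eq_iff mat2_mult_nth using e1 e2 e3
      by (simp add: power2_eq_square algebra_simps)
  qed
  have uniq: "S = ?S" if H: "?P S" for S
  proof -
    define p q r where "p = S$1$1" and "q = S$1$2" and "r = S$2$2"
    have T: "transpose S = S" using H by blast
    have "S$2$1 = (transpose S)$2$1" using T by simp
    also have "\<dots> = S$1$2" by (simp add: transpose_def)
    finally have q2: "S$2$1 = q" unfolding q_def .
    have PD: "\<And>v. v \<noteq> 0 \<Longrightarrow> v \<bullet> (S *v v) > 0" using H by blast
    have SS: "S ** S = ?A" using H by blast
    have p0: "p > 0"
      using PD[of "vector[1,0]"] unfolding mat2_quad p_def by (simp add: vec_eq_iff forall_2)
    have r0: "r > 0"
      using PD[of "vector[0,1]"] unfolding mat2_quad r_def by (simp add: vec_eq_iff forall_2)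
    have "vector[r,-q] \<noteq> (0::real^2)" using r0 by (auto simp: vec_eq_iff forall_2)
    from PD[OF this] have "r * (p * r - q^2) > 0"
      unfolding mat2_quad using q2 by (simp add: p_def q_def r_def power2_eq_square algebra_simps)
    then have D0: "p * r - q^2 > 0" using r0 by (simp add: zero_less_mult_iff)
    have m1: "p^2 + q^2 = 1" and m2: "p*q + q*r = m" and m3: "q^2 + r^2 = a"
      using arg_cong[OF SS, of "\<lambda>X. X$1$1"] arg_cong[OF SS, of "\<lambda>X. X$1$2"] arg_cong[OF SS, of "\<lambda>X. X$2$2"]
      unfolding mat2_mult_nth using q2 by (simp_all add: p_def q_def r_def power2_eq_square algebra_simps)
    have "(p*r - q^2)^2 = (p^2+q^2)*(q^2+r^2) - (p*q+q*r)^2" by (simp add: power2_eq_square algebra_simps)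
    then have "(p*r - q^2)^2 = a - m^2" using m1 m2 m3 by simp
    then have Ds: "p*r - q^2 = s" unfolding s_def using D0 by (metis less_imp_le real_sqrt_unique)
    have "(p+r)^2 = a + 1 + 2 * s" using m1 m3 Ds by (simp add: power2_eq_square algebra_simps)
    then have prt: "p + r = t" unfolding t_def using p0 r0 by (metis add_pos_pos less_imp_le real_sqrt_unique)
    have "p * t = p^2 + q^2 + (p*r - q^2)" unfolding prt[symmetric] by (simp add: power2_eq_square algebra_simps)
    then have "p * t = 1 + s" using m1 Ds by simp
    then have pe: "p = (1+s)/t" using t0 by (simp add: eq_divide_eq)
    have "q * t = m" using m2 unfolding prt[symmetric] by (simp add: algebra_simps)
    then have qe: "q = m/t" using t0 by (simp add: eq_divide_eq)
    have "r * t = q^2 + r^2 + (p*r - q^2)" unfolding prt[symmetric] by (simp add: power2_eq_square algebra_simps)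
    then have "r * t = a + s" using m3 Ds by simp
    then have re: "r = (a+s)/t" using t0 by (simp add: eq_divide_eq)
    show "S = ?S" unfolding mat2_eq_iff using pe qe re q2 by (simp add: p_def q_def r_def)
  qed
  show ?thesis unfolding pd_sqrt_def
    by (rule the_equality[of ?P, OF PS uniq])
qed

lemma cpr_by_bound:
  fixes X :: "nat \<Rightarrow> 'a \<Rightarrow> real"
  assumes ev: "\<And>t. t > 0 \<Longrightarrow> eventually (\<lambda>n. prob_space (M n) \<and> {\<omega>\<in>space (M n). t \<le> \<bar>X n \<omega> - c\<bar>} \<in> sets (M n) \<and>
      measure (M n) {\<omega>\<in>space (M n). t \<le> \<bar>X n \<omega> - c\<bar>} \<le> b n t) sequentially"
    and b: "\<And>t. t > 0 \<Longrightarrow> (\<lambda>n. b n t) \<longlonglongrightarrow> 0"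
  shows "cpr M X c"
  unfolding cpr_def
proof (intro allI impI)
  fix e d :: real assume e: "e > 0" and d: "d > 0"
  have "eventually (\<lambda>n. b n e < d) sequentially" using order_tendstoD(2)[OF b[OF e] d] .
  with ev[OF e] show "eventually (\<lambda>n. prob_space (M n) \<and>
      (\<exists>B\<in>sets (M n). {\<omega>\<in>space (M n). e < dist (X n \<omega>) c} \<subseteq> B \<and> measure (M n) B < d)) sequentially"
  proof eventually_elim
    case (elim n)
    then show ?case
      by (intro conjI bexI[of _ "{\<omega>\<in>space (M n). e \<le> \<bar>X n \<omega> - c\<bar>}"]) (auto simp: dist_real_def)
  qed
qed

lemma cpr_scaled_std:
  assumes ev: "eventually (\<lambda>n. prob_space (M n) \<and> distributed (M n) lborel (W n) std_normal_density) sequentially"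
    and k: "k \<longlonglongrightarrow> 0"
  shows "cpr M (\<lambda>n \<omega>. k n * W n \<omega>) 0"
proof (rule cpr_by_bound[where b="\<lambda>n t. (k n)^2 / t^2"])
  fix t :: real assume t: "t > 0"
  show "(\<lambda>n. (k n)^2 / t^2) \<longlonglongrightarrow> 0"
    using tendsto_divide[OF tendsto_power[OF k, of 2] tendsto_const[of "t^2"]] t by simp
  show "eventually (\<lambda>n. prob_space (M n) \<and> {\<omega>\<in>space (M n). t \<le> \<bar>k n * W n \<omega> - 0\<bar>} \<in> sets (M n) \<and>
      measure (M n) {\<omega>\<in>space (M n). t \<le> \<bar>k n * W n \<omega> - 0\<bar>} \<le> (k n)^2 / t^2) sequentially"
    using ev
  proof eventually_elim
    case (elim n)
    then have P: "prob_space (M n)" and D: "distributed (M n) lborel (W n) std_normal_density" by auto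
    interpret P: prob_space "M n" by (rule P)
    have rv[measurable]: "W n \<in> borel_measurable (M n)" using P.stdn_rv[OF D] .
    have sets: "{\<omega>\<in>space (M n). t \<le> \<bar>k n * W n \<omega> - 0\<bar>} \<in> sets (M n)" by measurable
    have "measure (M n) {\<omega>\<in>space (M n). t \<le> \<bar>k n * W n \<omega> - 0\<bar>} \<le> (k n)^2 / t^2"
    proof (cases "k n = 0")
      case True
      then have em: "{\<omega>\<in>space (M n). t \<le> \<bar>k n * W n \<omega> - 0\<bar>} = {}" using t by auto
      show ?thesis unfolding em by simp
    next
      case False
      then have kp: "\<bar>k n\<bar> > 0" by simp
      have eq: "{\<omega>\<in>space (M n). t \<le> \<bar>k n * W n \<omega> - 0\<bar>} = {\<omega>\<in>space (M n). \<bar>W n \<omega> - P.expectation (W n)\<bar> \<ge> t / \<bar>k n\<bar>}"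
        using kp by (auto simp: P.stdn_E1[OF D] abs_mult field_simps)
      have "P.prob {\<omega>\<in>space (M n). \<bar>W n \<omega> - P.expectation (W n)\<bar> \<ge> t / \<bar>k n\<bar>} \<le> P.variance (W n) / (t / \<bar>k n\<bar>)^2"
        by (rule P.Chebyshev_inequality) (use P.stdn_int[OF D, of 2] kp t in auto)
      also have "P.variance (W n) = 1" using P.stdn_E1[OF D] P.stdn_E2[OF D] by simp
      finally show ?thesis unfolding eq using kp by (simp add: power_divide power2_abs)
    qed
    then show ?case using P sets by blast
  qed
qed

lemma norm_mat2_le:
  fixes A :: "complex^2^2"
  shows "norm A \<le> norm (A$1$1) + norm (A$1$2) + norm (A$2$1) + norm (A$2$2)"
proof -
  have "norm A \<le> (\<Sum>i\<in>UNIV. norm (A$i))" unfolding norm_vec_def by (rule L2_set_le_sum) auto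
  also have "\<dots> \<le> (\<Sum>i\<in>UNIV. \<Sum>j\<in>UNIV. norm (A$i$j))"
    by (intro sum_mono) (unfold norm_vec_def, rule L2_set_le_sum, auto)
  finally show ?thesis by (simp add: sum_2 add.assoc)
qed

lemma norm_vec2_le:
  fixes v :: "real^2"
  shows "norm v \<le> \<bar>v$1\<bar> + \<bar>v$2\<bar>"
  using norm_le_l1_cart[of v] by (simp add: sum_2)

lemma clip_id: "a \<le> z \<Longrightarrow> z \<le> b \<Longrightarrow> clip a b z = z"
  unfolding clip_def by simp

lemma mean_cong: "(\<And>i. i < n \<Longrightarrow> f i = g i) \<Longrightarrow> mean n f = mean n g"
  unfolding mean_def by (metis lessThan_iff sum.cong)

lemma mean_add: "mean n (\<lambda>i. f i + g i) = mean n f + mean n g"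
  unfolding mean_def by (simp add: sum.distrib add_divide_distrib)

lemma mean_cmult: "mean n (\<lambda>i. c * f i) = c * mean n f"
  unfolding mean_def by (simp add: sum_distrib_left)

lemma mean_const: "n > 0 \<Longrightarrow> mean n (\<lambda>i. c) = c"
  unfolding mean_def by simp

locale L =
  fixes M :: "nat \<Rightarrow> 'a measure"
    and x :: "nat \<Rightarrow> nat \<Rightarrow> real"
    and y :: "nat \<Rightarrow> nat \<Rightarrow> 'a \<Rightarrow> real"
    and Z :: "nat \<Rightarrow> nat \<Rightarrow> 'a \<Rightarrow> real"
    and \<Delta> \<rho> :: "nat \<Rightarrow> real"
    and \<sigma>e \<beta>2 \<beta>1 cx cx2 :: real
  assumes \<sigma>e_pos: "\<sigma>e > 0"
    and prob: "\<And>n. n > 2 \<Longrightarrow> prob_space (M n)"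
    and y_distr: "\<And>n i. n > 2 \<Longrightarrow> i < n \<Longrightarrow>
                   distributed (M n) lborel (y n i) (normal_density (\<beta>2 + \<beta>1 * x n i) \<sigma>e)"
    and Z_distr: "\<And>n j. n > 2 \<Longrightarrow> j < 5 \<Longrightarrow> distributed (M n) lborel (Z n j) std_normal_density"
    and indep: "\<And>n. n > 2 \<Longrightarrow> prob_space.indep_vars (M n) (\<lambda>_. borel)
                   (\<lambda>k. case k of Inl i \<Rightarrow> y n i | Inr j \<Rightarrow> Z n j) ({..<n} <+> {..<5})"
    and \<Delta>_pos: "\<And>n. n > 2 \<Longrightarrow> \<Delta> n > 0"
    and \<rho>_pos: "\<And>n. n > 2 \<Longrightarrow> \<rho> n > 0"
    and A1x: "(\<lambda>n. mean n (\<lambda>i. x n i)) \<longlonglongrightarrow> cx"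
    and A1x2: "(\<lambda>n. mean n (\<lambda>i. (x n i)^2)) \<longlonglongrightarrow> cx2"
    and A1c: "cx2 > cx^2"
    and A3a: "(\<lambda>n. (\<Delta> n)^2 / (\<rho> n * real n)) \<longlonglongrightarrow> 0"
    and A3b: "(\<lambda>n. (\<Delta> n)^4 / (\<rho> n * real n)) \<longlonglongrightarrow> 0"
    and A4y: "(\<lambda>n. measure (M n) {\<omega> \<in> space (M n). \<exists>i<n. y n i \<omega> \<notin> {- \<Delta> n .. \<Delta> n}}) \<longlonglongrightarrow> 0"
    and A4x: "\<And>n i. n > 2 \<Longrightarrow> i < n \<Longrightarrow> x n i \<in> {- \<Delta> n .. \<Delta> n}"
begin

definition "k0 n = sqrt (2 * (\<Delta> n)^2 / ((\<rho> n / 5) * (real n)^2))"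
definition "k2 n = sqrt ((\<Delta> n)^4 / (2 * (\<rho> n / 5) * (real n)^2))"
definition "k3 n = sqrt (2 * (\<Delta> n)^4 / ((\<rho> n / 5) * (real n)^2))"
definition "E n = {\<omega> \<in> space (M n). \<exists>i<n. y n i \<omega> \<notin> {- \<Delta> n .. \<Delta> n}}"
definition "mu n i = \<beta>2 + \<beta>1 * x n i"
definition "e n i \<omega> = (y n i \<omega> - mu n i) / \<sigma>e"

lemma ev2: "eventually (\<lambda>n. n > (2::nat)) sequentially"
  by (rule eventually_gt_at_top)

lemma evp: "eventually (\<lambda>n. prob_space (M n)) sequentially"
  using ev2 by (rule eventually_mono) (rule prob)

lemma y_eq: "y n i \<omega> = mu n i + \<sigma>e * e n i \<omega>"
  unfolding e_def using \<sigma>e_pos by simp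

lemma sqrt_scale_lim:
  assumes lim: "(\<lambda>n. (\<Delta> n)^p / (\<rho> n * real n)) \<longlonglongrightarrow> 0" and c: "c > 0" and C: "C = 5 * c"
  shows "(\<lambda>n. sqrt (real n) * sqrt (c * (\<Delta> n)^p / ((\<rho> n / 5) * (real n)^2))) \<longlonglongrightarrow> 0"
proof -
  have "(\<lambda>n. sqrt (C * ((\<Delta> n)^p / (\<rho> n * real n)))) \<longlonglongrightarrow> sqrt (C * 0)"
    by (intro tendsto_intros lim)
  then have L0: "(\<lambda>n. sqrt (C * ((\<Delta> n)^p / (\<rho> n * real n)))) \<longlonglongrightarrow> 0" by simp
  show ?thesis
  proof (rule Lim_transform_eventually[OF L0])
    show "eventually (\<lambda>n. sqrt (C * ((\<Delta> n)^p / (\<rho> n * real n))) =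
             sqrt (real n) * sqrt (c * (\<Delta> n)^p / ((\<rho> n / 5) * (real n)^2))) sequentially"
      using ev2
    proof eventually_elim
      case (elim n)
      then have r: "\<rho> n > 0" by (rule \<rho>_pos)
      have "real n * (c * (\<Delta> n)^p / ((\<rho> n / 5) * (real n)^2)) = C * ((\<Delta> n)^p / (\<rho> n * real n))"
        using r elim C by (simp add: field_simps power2_eq_square)
      then show ?case by (simp add: real_sqrt_mult[symmetric])
    qed
  qed
qed

lemma sk0: "(\<lambda>n. sqrt (real n) * k0 n) \<longlonglongrightarrow> 0"
  unfolding k0_def by (rule sqrt_scale_lim[OF A3a]) auto
lemma sk3: "(\<lambda>n. sqrt (real n) * k3 n) \<longlonglongrightarrow> 0"
  unfolding k3_def by (rule sqrt_scale_lim[OF A3b]) auto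
lemma sk2: "(\<lambda>n. sqrt (real n) * k2 n) \<longlonglongrightarrow> 0"
proof -
  have "(\<lambda>n. sqrt (real n) * sqrt ((1/2) * (\<Delta> n)^4 / ((\<rho> n / 5) * (real n)^2))) \<longlonglongrightarrow> 0"
    by (rule sqrt_scale_lim[OF A3b, where C="5/2"]) auto
  moreover have "\<And>n. (1/2) * (\<Delta> n)^4 / ((\<rho> n / 5) * (real n)^2) = (\<Delta> n)^4 / (2 * (\<rho> n / 5) * (real n)^2)"
    by (simp add: field_simps)
  ultimately show ?thesis unfolding k2_def by (simp only:)
qed

lemma Zcpr:
  assumes j: "j < 5" and k: "k \<longlonglongrightarrow> 0"
  shows "cpr M (\<lambda>n \<omega>. k n * Z n j \<omega>) 0"
  by (rule cpr_scaled_std[OF _ k]) (use ev2 in \<open>rule eventually_mono\<close>, use j in \<open>auto intro: prob Z_distr\<close>)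

lemma x_abs: "n > 2 \<Longrightarrow> i < n \<Longrightarrow> \<bar>x n i\<bar> \<le> \<Delta> n"
  using A4x by fastforce

lemma tx_eq: "n > 2 \<Longrightarrow> tx \<Delta> \<rho> x Z n \<omega> = mean n (\<lambda>i. x n i) + k0 n * Z n 0 \<omega>"
  unfolding tx_def k0_def using A4x by (auto intro!: mean_cong clip_id)

lemma tx2_eq: "n > 2 \<Longrightarrow> tx2 \<Delta> \<rho> x Z n \<omega> = mean n (\<lambda>i. (x n i)^2) + k2 n * Z n 2 \<omega>"
  unfolding tx2_def k2_def
proof (intro arg_cong2[where f="(+)"] refl mean_cong clip_id)
  fix i assume "n > 2" "i < n"
  then have "\<bar>x n i\<bar> \<le> \<bar>\<Delta> n\<bar>" using x_abs by fastforce
  then show "(x n i)^2 \<le> (\<Delta> n)^2" by (simp add: abs_le_square_iff)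
qed simp

lemma good_y: "\<omega> \<in> space (M n) \<Longrightarrow> \<omega> \<notin> E n \<Longrightarrow> i < n \<Longrightarrow> \<bar>y n i \<omega>\<bar> \<le> \<Delta> n"
  unfolding E_def by auto

lemma ty_eq: "n > 2 \<Longrightarrow> \<omega> \<in> space (M n) \<Longrightarrow> \<omega> \<notin> E n \<Longrightarrow>
    ty \<Delta> \<rho> y Z n \<omega> = mean n (\<lambda>i. y n i \<omega>) + k0 n * Z n 1 \<omega>"
proof -
  assume h: "n > 2" "\<omega> \<in> space (M n)" "\<omega> \<notin> E n"
  have "\<And>i. i < n \<Longrightarrow> - \<Delta> n \<le> y n i \<omega> \<and> y n i \<omega> \<le> \<Delta> n"
    using good_y[OF h(2,3)] by (simp add: abs_le_iff) (metis add.inverse_inverse neg_le_iff_le)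
  then show ?thesis unfolding ty_def k0_def by (auto intro!: mean_cong clip_id)
qed

lemma ty2_eq: "n > 2 \<Longrightarrow> \<omega> \<in> space (M n) \<Longrightarrow> \<omega> \<notin> E n \<Longrightarrow>
    ty2 \<Delta> \<rho> y Z n \<omega> = mean n (\<lambda>i. (y n i \<omega>)^2) + k2 n * Z n 4 \<omega>"
  unfolding ty2_def k2_def
proof (intro arg_cong2[where f="(+)"] refl mean_cong clip_id)
  fix i assume "n > 2" "\<omega> \<in> space (M n)" "\<omega> \<notin> E n" "i < n"
  then have "\<bar>y n i \<omega>\<bar> \<le> \<bar>\<Delta> n\<bar>" using good_y by fastforce
  then show "(y n i \<omega>)^2 \<le> (\<Delta> n)^2" by (simp add: abs_le_square_iff)
qed simp

lemma txy_eq: "n > 2 \<Longrightarrow> \<omega> \<in> space (M n) \<Longrightarrow> \<omega> \<notin> E n \<Longrightarrow>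
    txy \<Delta> \<rho> x y Z n \<omega> = mean n (\<lambda>i. x n i * y n i \<omega>) + k3 n * Z n 3 \<omega>"
  unfolding txy_def k3_def
proof (intro arg_cong2[where f="(+)"] refl mean_cong clip_id)
  fix i assume h: "n > 2" "\<omega> \<in> space (M n)" "\<omega> \<notin> E n" "i < n"
  have "\<bar>x n i * y n i \<omega>\<bar> \<le> \<Delta> n * \<Delta> n"
    unfolding abs_mult using x_abs[OF h(1,4)] good_y[OF h(2,3,4)] by (intro mult_mono) auto
  then show "x n i * y n i \<omega> \<le> (\<Delta> n)^2" "- ((\<Delta> n)^2) \<le> x n i * y n i \<omega>"
    by (auto simp: power2_eq_square abs_le_iff)
qed

lemma E_sets: "n > 2 \<Longrightarrow> E n \<in> sets (M n)"
proof -
  assume n: "n > 2"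
  have "E n = {\<omega> \<in> space (M n). \<exists>i\<in>{..<n}. y n i \<omega> \<notin> {- \<Delta> n .. \<Delta> n}}" unfolding E_def by auto
  also have "\<dots> \<in> sets (M n)"
  proof (rule sets.sets_Collect_finite_Ex)
    fix i assume "i \<in> {..<n}"
    then have [measurable]: "y n i \<in> borel_measurable (M n)"
      using distributed_measurable[OF y_distr[OF n]] by simp
    show "{\<omega> \<in> space (M n). y n i \<omega> \<notin> {- \<Delta> n .. \<Delta> n}} \<in> sets (M n)" by measurable
  qed simp
  finally show ?thesis .
qed

lemma E_lim: "(\<lambda>n. measure (M n) (E n)) \<longlonglongrightarrow> 0"
  using A4y unfolding E_def .

end

lemma le_abs_div: "(c::real) > 0 \<Longrightarrow> (t \<le> \<bar>s\<bar> / c) = (c * t \<le> \<bar>s\<bar>)"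
  by (metis mult.commute pos_le_divide_eq)

context L begin

lemma y_meas: "n > 2 \<Longrightarrow> i < n \<Longrightarrow> y n i \<in> borel_measurable (M n)"
  using distributed_measurable[OF y_distr] by simp

lemma lln_setup:
  assumes n: "n > 2"
  shows "prob_space.indep_vars (M n) (\<lambda>_. borel) (\<lambda>k. case k of Inl i \<Rightarrow> y n i | Inr j \<Rightarrow> Z n j) (Inl ` {..<n})"
    and "\<And>i. i < n \<Longrightarrow> distributed (M n) lborel
           (\<lambda>\<omega>. ((case Inl i of Inl i \<Rightarrow> y n i | Inr j \<Rightarrow> Z n j) \<omega> - mu n i) / \<sigma>e) std_normal_density"
proof -
  interpret P: prob_space "M n" by (rule prob[OF n])
  show "prob_space.indep_vars (M n) (\<lambda>_. borel) (\<lambda>k. case k of Inl i \<Rightarrow> y n i | Inr j \<Rightarrow> Z n j) (Inl ` {..<n})"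
    by (rule P.indep_vars_subset[OF indep[OF n]]) (auto simp: Plus_def)
  fix i assume i: "i < n"
  show "distributed (M n) lborel
           (\<lambda>\<omega>. ((case Inl i of Inl i \<Rightarrow> y n i | Inr j \<Rightarrow> Z n j) \<omega> - mu n i) / \<sigma>e) std_normal_density"
    using P.normal_standard_normal_convert[OF \<sigma>e_pos, of "y n i" "mu n i"] y_distr[OF n i]
    by (simp add: mu_def)
qed

lemma R1:
  assumes cs: "(\<lambda>n. mean n (\<lambda>i. (c n i)^2)) \<longlonglongrightarrow> Lc"
  shows "cpr M (\<lambda>n \<omega>. mean n (\<lambda>i. c n i * e n i \<omega>)) 0"
proof (rule cpr_by_bound[where b="\<lambda>n t. (mean n (\<lambda>i. (c n i)^2) / t^2) * (1 / real n)"])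
  fix t :: real assume t: "t > 0"
  show "(\<lambda>n. (mean n (\<lambda>i. (c n i)^2) / t^2) * (1 / real n)) \<longlonglongrightarrow> 0"
    using tendsto_mult[OF tendsto_divide[OF cs tendsto_const[of "t^2"]] lim_1_over_n] t by simp
  show "eventually (\<lambda>n. prob_space (M n) \<and> {\<omega>\<in>space (M n). t \<le> \<bar>mean n (\<lambda>i. c n i * e n i \<omega>) - 0\<bar>} \<in> sets (M n) \<and>
      measure (M n) {\<omega>\<in>space (M n). t \<le> \<bar>mean n (\<lambda>i. c n i * e n i \<omega>) - 0\<bar>}
        \<le> (mean n (\<lambda>i. (c n i)^2) / t^2) * (1 / real n)) sequentially"
    using ev2
  proof eventually_elim
    case (elim n)
    have P: "prob_space (M n)" using prob[OF elim] .
    have npos: "real n > 0" using elim by simp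
    have ym: "\<And>i. i < n \<Longrightarrow> (\<lambda>\<omega>. c n i * e n i \<omega>) \<in> borel_measurable (M n)"
    proof -
      fix i assume "i < n"
      note y_meas[OF elim this, measurable]
      show "(\<lambda>\<omega>. c n i * e n i \<omega>) \<in> borel_measurable (M n)" unfolding e_def by measurable
    qed
    have fm[measurable]: "(\<lambda>\<omega>. \<Sum>i<n. c n i * e n i \<omega>) \<in> borel_measurable (M n)"
      using ym by (intro borel_measurable_sum) auto
    have seteq: "{\<omega>\<in>space (M n). t \<le> \<bar>mean n (\<lambda>i. c n i * e n i \<omega>) - 0\<bar>} =
                 {\<omega>\<in>space (M n). real n * t \<le> \<bar>(\<Sum>i<n. c n i * e n i \<omega>) - 0\<bar>}"
      using npos by (simp add: mean_def le_abs_div)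
    have sets: "{\<omega>\<in>space (M n). real n * t \<le> \<bar>(\<Sum>i<n. c n i * e n i \<omega>) - 0\<bar>} \<in> sets (M n)"
      by measurable
    have "measure (M n) {\<omega>\<in>space (M n). real n * t \<le> \<bar>(\<Sum>i<n. c n i * e n i \<omega>) - 0\<bar>}
          \<le> (\<Sum>i<n. (c n i)^2) / (real n * t)^2"
      using lln_lin[OF P inj_Inl lln_setup(1)[OF elim] lln_setup(2)[OF elim], of "real n * t" "c n"] npos t
      by (simp add: e_def)
    also have "\<dots> = (mean n (\<lambda>i. (c n i)^2) / t^2) * (1 / real n)"
      using npos by (simp add: mean_def field_simps power2_eq_square)
    finally show ?case using P sets seteq by simp
  qed
qed

lemma R2: "cpr M (\<lambda>n \<omega>. mean n (\<lambda>i. (e n i \<omega>)^2)) 1"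
proof (rule cpr_by_bound[where b="\<lambda>n t. (2 / t^2) * (1 / real n)"])
  fix t :: real assume t: "t > 0"
  show "(\<lambda>n. (2 / t^2) * (1 / real n)) \<longlonglongrightarrow> 0"
    using tendsto_mult[OF tendsto_const[of "2 / t^2"] lim_1_over_n] by simp
  show "eventually (\<lambda>n. prob_space (M n) \<and> {\<omega>\<in>space (M n). t \<le> \<bar>mean n (\<lambda>i. (e n i \<omega>)^2) - 1\<bar>} \<in> sets (M n) \<and>
      measure (M n) {\<omega>\<in>space (M n). t \<le> \<bar>mean n (\<lambda>i. (e n i \<omega>)^2) - 1\<bar>}
        \<le> (2 / t^2) * (1 / real n)) sequentially"
    using ev2
  proof eventually_elim
    case (elim n)
    have P: "prob_space (M n)" using prob[OF elim] .
    have npos: "real n > 0" using elim by simp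
    have ym: "\<And>i. i < n \<Longrightarrow> (\<lambda>\<omega>. (e n i \<omega>)^2) \<in> borel_measurable (M n)"
    proof -
      fix i assume "i < n"
      note y_meas[OF elim this, measurable]
      show "(\<lambda>\<omega>. (e n i \<omega>)^2) \<in> borel_measurable (M n)" unfolding e_def by measurable
    qed
    have fm[measurable]: "(\<lambda>\<omega>. \<Sum>i<n. (e n i \<omega>)^2) \<in> borel_measurable (M n)"
      using ym by (intro borel_measurable_sum) auto
    have seteq: "{\<omega>\<in>space (M n). t \<le> \<bar>mean n (\<lambda>i. (e n i \<omega>)^2) - 1\<bar>} =
                 {\<omega>\<in>space (M n). real n * t \<le> \<bar>(\<Sum>i<n. (e n i \<omega>)^2) - real n\<bar>}"
    proof -
      have "\<And>\<omega>. mean n (\<lambda>i. (e n i \<omega>)^2) - 1 = ((\<Sum>i<n. (e n i \<omega>)^2) - real n) / real n"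
        using npos by (simp add: mean_def field_simps)
      then show ?thesis
        using npos by (simp add: le_abs_div)
    qed
    have sets: "{\<omega>\<in>space (M n). real n * t \<le> \<bar>(\<Sum>i<n. (e n i \<omega>)^2) - real n\<bar>} \<in> sets (M n)"
      by measurable
    have "measure (M n) {\<omega>\<in>space (M n). real n * t \<le> \<bar>(\<Sum>i<n. (e n i \<omega>)^2) - real n\<bar>}
          \<le> 2 * real n / (real n * t)^2"
      using lln_sq[OF P inj_Inl lln_setup(1)[OF elim] lln_setup(2)[OF elim], of "real n * t"] npos t
      by (simp add: e_def)
    also have "\<dots> = (2 / t^2) * (1 / real n)"
      using npos by (simp add: field_simps power2_eq_square)
    finally show ?case using P sets seteq by simp
  qed
qed

end

lemma cpr_eq_ev:
  assumes "cpr M Y c" "eventually (\<lambda>n. \<forall>\<omega>\<in>space (M n). X n \<omega> = Y n \<omega>) sequentially"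
  shows "cpr M X c"
  by (rule cpr_le[OF assms(1)]) (use assms(2) in \<open>auto elim!: eventually_mono\<close>)

lemma cpr_drop_sqrt:
  fixes X :: "nat \<Rightarrow> 'a \<Rightarrow> real"
  assumes "cpr M (\<lambda>n \<omega>. sqrt (real n) * X n \<omega>) 0"
  shows "cpr M X 0"
proof (rule cpr_le[OF assms])
  show "\<forall>\<^sub>F n in sequentially. \<forall>\<omega>\<in>space (M n). dist (X n \<omega>) 0 \<le> dist (sqrt (real n) * X n \<omega>) 0"
    using eventually_ge_at_top[of "1::nat"]
  proof eventually_elim
    case (elim n)
    then have "1 \<le> sqrt (real n)" by simp
    then show ?case using mult_right_mono[OF \<open>1 \<le> sqrt (real n)\<close>, of "\<bar>X n _\<bar>"]
      by (auto simp: dist_real_def abs_mult)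
  qed
qed

context L begin

lemma mean_mu: "n > 0 \<Longrightarrow> mean n (mu n) = \<beta>2 + \<beta>1 * mean n (\<lambda>i. x n i)"
  unfolding mu_def using mean_add[of n "\<lambda>i. \<beta>2" "\<lambda>i. \<beta>1 * x n i"] mean_cmult[of n \<beta>1 "\<lambda>i. x n i"]
  by (simp add: mean_const)

lemma mean_y: "n > 0 \<Longrightarrow> mean n (\<lambda>i. y n i \<omega>) = (\<beta>2 + \<beta>1 * mean n (\<lambda>i. x n i)) + \<sigma>e * mean n (\<lambda>i. 1 * e n i \<omega>)"
proof -
  assume n: "n > 0"
  have "mean n (\<lambda>i. y n i \<omega>) = mean n (\<lambda>i. mu n i + \<sigma>e * (1 * e n i \<omega>))" by (simp add: y_eq)
  also have "\<dots> = mean n (mu n) + \<sigma>e * mean n (\<lambda>i. 1 * e n i \<omega>)"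
    by (simp add: mean_add mean_cmult)
  finally show ?thesis using mean_mu[OF n] by simp
qed

lemma mean_xy: "mean n (\<lambda>i. x n i * y n i \<omega>) =
   (\<beta>2 * mean n (\<lambda>i. x n i) + \<beta>1 * mean n (\<lambda>i. (x n i)^2)) + \<sigma>e * mean n (\<lambda>i. x n i * e n i \<omega>)"
proof -
  have "mean n (\<lambda>i. x n i * y n i \<omega>) = mean n (\<lambda>i. (\<beta>2 * x n i + \<beta>1 * (x n i)^2) + \<sigma>e * (x n i * e n i \<omega>))"
    by (rule mean_cong) (simp add: y_eq mu_def algebra_simps power2_eq_square)
  also have "\<dots> = (\<beta>2 * mean n (\<lambda>i. x n i) + \<beta>1 * mean n (\<lambda>i. (x n i)^2)) + \<sigma>e * mean n (\<lambda>i. x n i * e n i \<omega>)"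
    by (simp add: mean_add mean_cmult)
  finally show ?thesis .
qed

lemma mean_mu2: "n > 0 \<Longrightarrow> mean n (\<lambda>i. (mu n i)^2) =
   \<beta>2^2 + 2 * \<beta>2 * \<beta>1 * mean n (\<lambda>i. x n i) + \<beta>1^2 * mean n (\<lambda>i. (x n i)^2)"
proof -
  assume n: "n > 0"
  have "mean n (\<lambda>i. (mu n i)^2) = mean n (\<lambda>i. \<beta>2^2 + ((2 * \<beta>2 * \<beta>1) * x n i + \<beta>1^2 * (x n i)^2))"
    by (rule mean_cong) (simp add: mu_def algebra_simps power2_eq_square)
  also have "\<dots> = \<beta>2^2 + 2 * \<beta>2 * \<beta>1 * mean n (\<lambda>i. x n i) + \<beta>1^2 * mean n (\<lambda>i. (x n i)^2)"
    using n by (simp add: mean_add mean_cmult mean_const)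
  finally show ?thesis .
qed

lemma mean_y2: "mean n (\<lambda>i. (y n i \<omega>)^2) =
   mean n (\<lambda>i. (mu n i)^2) + 2 * \<sigma>e * mean n (\<lambda>i. mu n i * e n i \<omega>) + \<sigma>e^2 * mean n (\<lambda>i. (e n i \<omega>)^2)"
proof -
  have "mean n (\<lambda>i. (y n i \<omega>)^2) = mean n (\<lambda>i. ((mu n i)^2 + (2 * \<sigma>e) * (mu n i * e n i \<omega>)) + \<sigma>e^2 * (e n i \<omega>)^2)"
    by (rule mean_cong) (simp add: y_eq algebra_simps power2_eq_square)
  also have "\<dots> = mean n (\<lambda>i. (mu n i)^2) + 2 * \<sigma>e * mean n (\<lambda>i. mu n i * e n i \<omega>) + \<sigma>e^2 * mean n (\<lambda>i. (e n i \<omega>)^2)"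
    by (simp add: mean_add mean_cmult)
  finally show ?thesis .
qed

lemma lim_ev_const: "eventually (\<lambda>n. f n = c) sequentially \<Longrightarrow> f \<longlonglongrightarrow> c"
  by (rule Lim_transform_eventually[OF tendsto_const]) (auto elim: eventually_mono)

lemma C_x: "close2 M (tx \<Delta> \<rho> x Z) (\<lambda>n \<omega>. mean n (\<lambda>i. x n i)) cx"
proof (rule close2I)
  show "cpr M (\<lambda>n \<omega>. mean n (\<lambda>i. x n i)) cx" by (rule cpr_const[OF A1x evp])
  have "cpr M (\<lambda>n \<omega>. (sqrt (real n) * k0 n) * Z n 0 \<omega>) 0" by (rule Zcpr[OF _ sk0]) simp
  then show "close M (tx \<Delta> \<rho> x Z) (\<lambda>n \<omega>. mean n (\<lambda>i. x n i))"
    unfolding close_def by (rule cpr_eq_ev) (rule eventually_mono[OF ev2], simp add: tx_eq)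
qed

lemma C_x2: "close2 M (tx2 \<Delta> \<rho> x Z) (\<lambda>n \<omega>. mean n (\<lambda>i. (x n i)^2)) cx2"
proof (rule close2I)
  show "cpr M (\<lambda>n \<omega>. mean n (\<lambda>i. (x n i)^2)) cx2" by (rule cpr_const[OF A1x2 evp])
  have "cpr M (\<lambda>n \<omega>. (sqrt (real n) * k2 n) * Z n 2 \<omega>) 0" by (rule Zcpr[OF _ sk2]) simp
  then show "close M (tx2 \<Delta> \<rho> x Z) (\<lambda>n \<omega>. mean n (\<lambda>i. (x n i)^2))"
    unfolding close_def by (rule cpr_eq_ev) (rule eventually_mono[OF ev2], simp add: tx2_eq)
qed

lemma close_E:
  assumes Y: "cpr M W 0"
    and eq: "\<And>n \<omega>. n > 2 \<Longrightarrow> \<omega> \<in> space (M n) \<Longrightarrow> \<omega> \<notin> E n \<Longrightarrow> X n \<omega> = W n \<omega>"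
  shows "cpr M X 0"
proof (rule cpr_le_gen[OF Y Y zero_less_one E_lim])
  show "\<forall>\<^sub>F n in sequentially. E n \<in> sets (M n) \<and> (\<forall>\<omega>\<in>space (M n). dist (W n \<omega>) 0 < 1 \<longrightarrow> \<omega> \<notin> E n \<longrightarrow>
              dist (X n \<omega>) 0 \<le> dist (W n \<omega>) 0)"
    using ev2 by (rule eventually_mono) (auto simp: E_sets eq)
qed

lemma cpr_yb: "cpr M (\<lambda>n \<omega>. mean n (\<lambda>i. y n i \<omega>)) (\<beta>2 + \<beta>1 * cx)"
proof -
  have m1: "(\<lambda>n. mean n (\<lambda>i. (1::real)^2)) \<longlonglongrightarrow> 1"
    by (rule lim_ev_const) (rule eventually_mono[OF ev2], simp add: mean_const)
  have "cpr M (\<lambda>n \<omega>. (\<beta>2 + \<beta>1 * mean n (\<lambda>i. x n i)) + \<sigma>e * mean n (\<lambda>i. 1 * e n i \<omega>)) ((\<beta>2 + \<beta>1 * cx) + \<sigma>e * 0)"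
    by (intro cpr_add cpr_mult cpr_const[OF _ evp] R1[OF m1] tendsto_intros A1x)
  then have "cpr M (\<lambda>n \<omega>. (\<beta>2 + \<beta>1 * mean n (\<lambda>i. x n i)) + \<sigma>e * mean n (\<lambda>i. 1 * e n i \<omega>)) (\<beta>2 + \<beta>1 * cx)"
    by simp
  then show ?thesis
    by (rule cpr_eq_ev) (rule eventually_mono[OF ev2], simp add: mean_y)
qed

lemma cpr_xyb: "cpr M (\<lambda>n \<omega>. mean n (\<lambda>i. x n i * y n i \<omega>)) (\<beta>2 * cx + \<beta>1 * cx2)"
proof -
  have "cpr M (\<lambda>n \<omega>. (\<beta>2 * mean n (\<lambda>i. x n i) + \<beta>1 * mean n (\<lambda>i. (x n i)^2)) + \<sigma>e * mean n (\<lambda>i. x n i * e n i \<omega>))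
           ((\<beta>2 * cx + \<beta>1 * cx2) + \<sigma>e * 0)"
    by (intro cpr_add cpr_mult cpr_const[OF _ evp] R1[OF A1x2] tendsto_intros A1x A1x2)
  then show ?thesis by (simp add: mean_xy)
qed

lemma C_y: "close2 M (ty \<Delta> \<rho> y Z) (\<lambda>n \<omega>. mean n (\<lambda>i. y n i \<omega>)) (\<beta>2 + \<beta>1 * cx)"
proof (rule close2I[OF _ cpr_yb])
  have "cpr M (\<lambda>n \<omega>. (sqrt (real n) * k0 n) * Z n 1 \<omega>) 0" by (rule Zcpr[OF _ sk0]) simp
  then show "close M (ty \<Delta> \<rho> y Z) (\<lambda>n \<omega>. mean n (\<lambda>i. y n i \<omega>))"
    unfolding close_def by (rule close_E) (simp add: ty_eq)
qed

lemma C_xy: "close2 M (txy \<Delta> \<rho> x y Z) (\<lambda>n \<omega>. mean n (\<lambda>i. x n i * y n i \<omega>)) (\<beta>2 * cx + \<beta>1 * cx2)"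
proof (rule close2I[OF _ cpr_xyb])
  have "cpr M (\<lambda>n \<omega>. (sqrt (real n) * k3 n) * Z n 3 \<omega>) 0" by (rule Zcpr[OF _ sk3]) simp
  then show "close M (txy \<Delta> \<rho> x y Z) (\<lambda>n \<omega>. mean n (\<lambda>i. x n i * y n i \<omega>))"
    unfolding close_def by (rule close_E) (simp add: txy_eq)
qed

lemma cpr_ty2: "cpr M (ty2 \<Delta> \<rho> y Z) (\<beta>2^2 + 2 * cx * \<beta>1 * \<beta>2 + \<beta>1^2 * cx2 + \<sigma>e^2)"
proof -
  have mu2: "(\<lambda>n. mean n (\<lambda>i. (mu n i)^2)) \<longlonglongrightarrow> \<beta>2^2 + 2 * \<beta>2 * \<beta>1 * cx + \<beta>1^2 * cx2"
  proof (rule Lim_transform_eventually)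
    show "(\<lambda>n. \<beta>2^2 + 2 * \<beta>2 * \<beta>1 * mean n (\<lambda>i. x n i) + \<beta>1^2 * mean n (\<lambda>i. (x n i)^2))
            \<longlonglongrightarrow> \<beta>2^2 + 2 * \<beta>2 * \<beta>1 * cx + \<beta>1^2 * cx2"
      by (intro tendsto_intros A1x A1x2)
    show "eventually (\<lambda>n. \<beta>2^2 + 2 * \<beta>2 * \<beta>1 * mean n (\<lambda>i. x n i) + \<beta>1^2 * mean n (\<lambda>i. (x n i)^2)
            = mean n (\<lambda>i. (mu n i)^2)) sequentially"
      using ev2 by (rule eventually_mono) (simp add: mean_mu2)
  qed
  have kz: "cpr M (\<lambda>n \<omega>. k2 n * Z n 4 \<omega>) 0"
    by (rule cpr_drop_sqrt) (use Zcpr[OF _ sk2, of 4] in \<open>simp add: mult.assoc\<close>)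
  have "cpr M (\<lambda>n \<omega>. (mean n (\<lambda>i. (mu n i)^2) + 2 * \<sigma>e * mean n (\<lambda>i. mu n i * e n i \<omega>)
              + \<sigma>e^2 * mean n (\<lambda>i. (e n i \<omega>)^2)) + k2 n * Z n 4 \<omega>)
          (((\<beta>2^2 + 2 * \<beta>2 * \<beta>1 * cx + \<beta>1^2 * cx2) + 2 * \<sigma>e * 0 + \<sigma>e^2 * 1) + 0)"
    by (intro cpr_add cpr_mult cpr_const[OF _ evp] R1[OF mu2] R2 kz mu2 tendsto_const)
  then have c: "cpr M (\<lambda>n \<omega>. mean n (\<lambda>i. (y n i \<omega>)^2) + k2 n * Z n 4 \<omega>)
          (\<beta>2^2 + 2 * cx * \<beta>1 * \<beta>2 + \<beta>1^2 * cx2 + \<sigma>e^2)"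
    by (simp add: mean_y2 algebra_simps)
  show ?thesis
  proof (rule cpr_le_gen[OF c c zero_less_one E_lim])
    show "\<forall>\<^sub>F n in sequentially. E n \<in> sets (M n) \<and> (\<forall>\<omega>\<in>space (M n).
        dist (mean n (\<lambda>i. (y n i \<omega>)^2) + k2 n * Z n 4 \<omega>) (\<beta>2^2 + 2 * cx * \<beta>1 * \<beta>2 + \<beta>1^2 * cx2 + \<sigma>e^2) < 1 \<longrightarrow>
        \<omega> \<notin> E n \<longrightarrow> dist (ty2 \<Delta> \<rho> y Z n \<omega>) (\<beta>2^2 + 2 * cx * \<beta>1 * \<beta>2 + \<beta>1^2 * cx2 + \<sigma>e^2)
          \<le> dist (mean n (\<lambda>i. (y n i \<omega>)^2) + k2 n * Z n 4 \<omega>) (\<beta>2^2 + 2 * cx * \<beta>1 * \<beta>2 + \<beta>1^2 * cx2 + \<sigma>e^2))"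
      using ev2 by (rule eventually_mono) (auto simp: E_sets ty2_eq)
  qed
qed

end

definition "gsb m a = sqrt (a - m * m)"
definition "gD m a = sqrt (a + 1 + 2 * gsb m a)"
definition "g11 m a = (1 + gsb m a) * (1 / gD m a)"
definition "g12 m a = m * (1 / gD m a)"
definition "g22 m a = (a + gsb m a) * (1 / gD m a)"

definition Gc :: "real \<Rightarrow> real \<Rightarrow> complex^2^2" where
  "Gc m a = (let A = complex_of_real a;
          mm = complex_of_real m;
          s = csqrt (complex_of_real (a - m^2));
          d = csqrt (A + 1 + 2 * s)
      in vector [vector [(1 + s) / d, mm / d], vector [mm / d, (A + s) / d]])"

lemma Etil_Gc: "Etil \<Delta> \<rho> x Z n \<omega> = Gc (tx \<Delta> \<rho> x Z n \<omega>) (tx2 \<Delta> \<rho> x Z n \<omega>)"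
  unfolding Etil_def Gc_def tsx_def ..

lemma Gc_entries:
  assumes pos: "a - m * m > 0"
  shows "Gc m a $1$1 = complex_of_real (g11 m a)" "Gc m a $1$2 = complex_of_real (g12 m a)"
        "Gc m a $2$1 = complex_of_real (g12 m a)" "Gc m a $2$2 = complex_of_real (g22 m a)"
proof -
  have mm: "m^2 = m * m" by (simp add: power2_eq_square)
  have a0: "a > 0" using pos by (smt (verit) zero_le_square)
  have s: "csqrt (complex_of_real (a - m^2)) = complex_of_real (gsb m a)"
  proof -
    have "a - m * m \<ge> 0" using pos by simp
    then show ?thesis unfolding gsb_def mm by (rule csqrt_of_real)
  qed
  have sb0: "gsb m a \<ge> 0" using pos unfolding gsb_def by simp
  have d: "csqrt (complex_of_real a + 1 + 2 * complex_of_real (gsb m a)) = complex_of_real (gD m a)"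
  proof -
    have "complex_of_real a + 1 + 2 * complex_of_real (gsb m a) = complex_of_real (a + 1 + 2 * gsb m a)" by simp
    then show ?thesis unfolding gD_def using a0 sb0 by (simp add: csqrt_of_real)
  qed
  show "Gc m a $1$1 = complex_of_real (g11 m a)" "Gc m a $1$2 = complex_of_real (g12 m a)"
        "Gc m a $2$1 = complex_of_real (g12 m a)" "Gc m a $2$2 = complex_of_real (g22 m a)"
    unfolding Gc_def Let_def s d g11_def g12_def g22_def by simp_all
qed

lemma Ehat_eq:
  assumes n: "n > 0" and pos: "mean n (\<lambda>i. (x n i)^2) - mean n (\<lambda>i. x n i) * mean n (\<lambda>i. x n i) > 0"
  shows "Ehat x n = vector [vector [g11 (mean n (\<lambda>i. x n i)) (mean n (\<lambda>i. (x n i)^2)),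
                                    g12 (mean n (\<lambda>i. x n i)) (mean n (\<lambda>i. (x n i)^2))],
                            vector [g12 (mean n (\<lambda>i. x n i)) (mean n (\<lambda>i. (x n i)^2)),
                                    g22 (mean n (\<lambda>i. x n i)) (mean n (\<lambda>i. (x n i)^2))]]"
proof -
  let ?m = "mean n (\<lambda>i. x n i)" and ?a = "mean n (\<lambda>i. (x n i)^2)"
  have mat: "(\<chi> i j. mean n (\<lambda>k. (vector [1, x n k] :: real^2) $ i * (vector [1, x n k] :: real^2) $ j))
        = vector [vector [1, ?m], vector [?m, ?a]]"
    using n by (simp add: vec_eq_iff forall_2 mean_const power2_eq_square)
  have pos2: "?a - ?m^2 > 0" using pos by (simp add: power2_eq_square)
  have "Ehat x n = vector [vector [(1 + gsb ?m ?a) / gD ?m ?a, ?m / gD ?m ?a], vector [?m / gD ?m ?a, (?a + gsb ?m ?a) / gD ?m ?a]]"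
    unfolding Ehat_def mat
    by (rule pd_sqrt_2[OF pos2]) (simp_all add: gsb_def gD_def power2_eq_square)
  then show ?thesis by (simp add: g11_def g12_def g22_def)
qed

lemma Chalf_eq:
  assumes "cb = cx2 - cx^2"
  shows "(1 / sqrt (cx2 + 1 + 2 * sqrt cb)) *\<^sub>R
                   (vector [vector [1 + sqrt cb, cx], vector [cx, cx2 + sqrt cb]] :: real^2^2)
       = vector [vector [g11 cx cx2, g12 cx cx2], vector [g12 cx cx2, g22 cx cx2]]"
  using assms by (simp add: vec_eq_iff forall_2 g11_def g12_def g22_def gD_def gsb_def power2_eq_square)

lemma cmat_nth: "cmat A $ i $ j = complex_of_real (A $ i $ j)"
  unfolding cmat_def by simp

lemma mat_entry_scale_diff:
  fixes A B :: "complex^2^2"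
  shows "(c *\<^sub>R (A - B)) $ i $ j = complex_of_real c * (A $ i $ j - B $ i $ j)"
  by (simp only: vector_scaleR_component vector_minus_component) (simp add: scaleR_conv_of_real)

context L begin

lemma cpr_T1: "cpr M (tx \<Delta> \<rho> x Z) cx" using C_x unfolding close2_def by blast

lemma CS: "close2 M (\<lambda>n \<omega>. gsb (tx \<Delta> \<rho> x Z n \<omega>) (tx2 \<Delta> \<rho> x Z n \<omega>))
     (\<lambda>n \<omega>. gsb (mean n (\<lambda>i. x n i)) (mean n (\<lambda>i. (x n i)^2))) (gsb cx cx2)"
  unfolding gsb_def
  by (rule close2_sqrt[OF close2_diff[OF C_x2 close2_mult[OF C_x C_x]]]) (use A1c in \<open>simp add: power2_eq_square\<close>)

lemma gsb_nonneg: "gsb cx cx2 \<ge> 0" unfolding gsb_def using A1c by (simp add: power2_eq_square)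

lemma CD: "close2 M (\<lambda>n \<omega>. gD (tx \<Delta> \<rho> x Z n \<omega>) (tx2 \<Delta> \<rho> x Z n \<omega>))
     (\<lambda>n \<omega>. gD (mean n (\<lambda>i. x n i)) (mean n (\<lambda>i. (x n i)^2))) (gD cx cx2)"
proof -
  have pos: "cx2 + 1 + 2 * gsb cx cx2 > 0"
    using A1c gsb_nonneg by (smt (verit) zero_le_power2)
  show ?thesis unfolding gD_def
    by (rule close2_sqrt[OF close2_add[OF close2_add[OF C_x2 close2_const[OF cpr_T1]]
            close2_mult[OF close2_const[OF cpr_T1] CS]] pos])
qed

lemma CDi: "close2 M (\<lambda>n \<omega>. 1 / gD (tx \<Delta> \<rho> x Z n \<omega>) (tx2 \<Delta> \<rho> x Z n \<omega>))
     (\<lambda>n \<omega>. 1 / gD (mean n (\<lambda>i. x n i)) (mean n (\<lambda>i. (x n i)^2))) (1 / gD cx cx2)"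
proof (rule close2_inv[OF CD])
  have "cx2 + 1 + 2 * gsb cx cx2 > 0"
    using A1c gsb_nonneg by (smt (verit) zero_le_power2)
  then show "gD cx cx2 \<noteq> 0" unfolding gD_def by simp
qed

lemma G11: "close2 M (\<lambda>n \<omega>. g11 (tx \<Delta> \<rho> x Z n \<omega>) (tx2 \<Delta> \<rho> x Z n \<omega>))
     (\<lambda>n \<omega>. g11 (mean n (\<lambda>i. x n i)) (mean n (\<lambda>i. (x n i)^2))) (g11 cx cx2)"
  unfolding g11_def by (rule close2_mult[OF close2_add[OF close2_const[OF cpr_T1] CS] CDi])

lemma G12: "close2 M (\<lambda>n \<omega>. g12 (tx \<Delta> \<rho> x Z n \<omega>) (tx2 \<Delta> \<rho> x Z n \<omega>))
     (\<lambda>n \<omega>. g12 (mean n (\<lambda>i. x n i)) (mean n (\<lambda>i. (x n i)^2))) (g12 cx cx2)"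
  unfolding g12_def by (rule close2_mult[OF C_x CDi])

lemma G22: "close2 M (\<lambda>n \<omega>. g22 (tx \<Delta> \<rho> x Z n \<omega>) (tx2 \<Delta> \<rho> x Z n \<omega>))
     (\<lambda>n \<omega>. g22 (mean n (\<lambda>i. x n i)) (mean n (\<lambda>i. (x n i)^2))) (g22 cx cx2)"
  unfolding g22_def by (rule close2_mult[OF close2_add[OF C_x2 CS] CDi])

lemma C_sx: "close2 M (\<lambda>n \<omega>. tx2 \<Delta> \<rho> x Z n \<omega> - tx \<Delta> \<rho> x Z n \<omega> * tx \<Delta> \<rho> x Z n \<omega>)
     (\<lambda>n \<omega>. mean n (\<lambda>i. (x n i)^2) - mean n (\<lambda>i. x n i) * mean n (\<lambda>i. x n i)) (cx2 - cx * cx)"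
  by (rule close2_diff[OF C_x2 close2_mult[OF C_x C_x]])

lemma cb_pos: "cx2 - cx * cx > 0" using A1c by (simp add: power2_eq_square)

lemma det_pos_ev: "eventually (\<lambda>n. mean n (\<lambda>i. (x n i)^2) - mean n (\<lambda>i. x n i) * mean n (\<lambda>i. x n i) > 0) sequentially"
proof -
  have "(\<lambda>n. mean n (\<lambda>i. (x n i)^2) - mean n (\<lambda>i. x n i) * mean n (\<lambda>i. x n i)) \<longlonglongrightarrow> cx2 - cx * cx"
    by (intro tendsto_intros A1x A1x2)
  from order_tendstoD(1)[OF this cb_pos] show ?thesis .
qed

lemma region:
  assumes "dist (tx2 \<Delta> \<rho> x Z n \<omega> - tx \<Delta> \<rho> x Z n \<omega> * tx \<Delta> \<rho> x Z n \<omega>) (cx2 - cx * cx) < cx2 - cx * cx"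
  shows "tx2 \<Delta> \<rho> x Z n \<omega> - tx \<Delta> \<rho> x Z n \<omega> * tx \<Delta> \<rho> x Z n \<omega> > 0"
  using assms unfolding dist_real_def by linarith

lemma P10a: "cpr M (\<lambda>n \<omega>. sqrt (real n) *\<^sub>R (Etil \<Delta> \<rho> x Z n \<omega> - cmat (Ehat x n))) 0"
proof -
  let ?T1 = "tx \<Delta> \<rho> x Z" and ?T2 = "tx2 \<Delta> \<rho> x Z"
  let ?m = "\<lambda>n. mean n (\<lambda>i. x n i)" and ?a = "\<lambda>n. mean n (\<lambda>i. (x n i)^2)"
  define U11 where "U11 n \<omega> = sqrt (real n) * (g11 (?T1 n \<omega>) (?T2 n \<omega>) - g11 (?m n) (?a n))" for n \<omega>
  define U12 where "U12 n \<omega> = sqrt (real n) * (g12 (?T1 n \<omega>) (?T2 n \<omega>) - g12 (?m n) (?a n))" for n \<omega>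
  define U22 where "U22 n \<omega> = sqrt (real n) * (g22 (?T1 n \<omega>) (?T2 n \<omega>) - g22 (?m n) (?a n))" for n \<omega>
  have u11: "cpr M U11 0" using G11 unfolding close2_def close_def U11_def by blast
  have u12: "cpr M U12 0" using G12 unfolding close2_def close_def U12_def by blast
  have u22: "cpr M U22 0" using G22 unfolding close2_def close_def U22_def by blast
  have "cpr M (\<lambda>n \<omega>. \<bar>U11 n \<omega>\<bar> + \<bar>U12 n \<omega>\<bar> + \<bar>U12 n \<omega>\<bar> + \<bar>U22 n \<omega>\<bar>) (\<bar>0\<bar> + \<bar>0\<bar> + \<bar>0\<bar> + \<bar>0\<bar>)"
    by (intro cpr_add cpr_abs u11 u12 u22)
  then have cY: "cpr M (\<lambda>n \<omega>. \<bar>U11 n \<omega>\<bar> + \<bar>U12 n \<omega>\<bar> + \<bar>U12 n \<omega>\<bar> + \<bar>U22 n \<omega>\<bar>) 0" by simp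
  have cT: "cpr M (\<lambda>n \<omega>. ?T2 n \<omega> - ?T1 n \<omega> * ?T1 n \<omega>) (cx2 - cx * cx)"
    using C_sx unfolding close2_def by blast
  show ?thesis
  proof (rule cpr_le_on[OF cY cT cb_pos])
    show "\<forall>\<^sub>F n in sequentially. \<forall>\<omega>\<in>space (M n).
      dist (?T2 n \<omega> - ?T1 n \<omega> * ?T1 n \<omega>) (cx2 - cx * cx) < cx2 - cx * cx \<longrightarrow>
      dist (sqrt (real n) *\<^sub>R (Etil \<Delta> \<rho> x Z n \<omega> - cmat (Ehat x n))) 0
        \<le> dist (\<bar>U11 n \<omega>\<bar> + \<bar>U12 n \<omega>\<bar> + \<bar>U12 n \<omega>\<bar> + \<bar>U22 n \<omega>\<bar>) 0"
      using ev2 det_pos_ev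
    proof eventually_elim
      case (elim n)
      show ?case
      proof (intro ballI impI)
        fix \<omega> assume "\<omega> \<in> space (M n)"
          and d: "dist (?T2 n \<omega> - ?T1 n \<omega> * ?T1 n \<omega>) (cx2 - cx * cx) < cx2 - cx * cx"
        have rp: "?T2 n \<omega> - ?T1 n \<omega> * ?T1 n \<omega> > 0" using region[OF d] .
        note GE = Gc_entries[OF rp]
        have EH: "Ehat x n = vector [vector [g11 (?m n) (?a n), g12 (?m n) (?a n)],
                            vector [g12 (?m n) (?a n), g22 (?m n) (?a n)]]"
          using Ehat_eq[of n x] elim by simp
        let ?D = "sqrt (real n) *\<^sub>R (Etil \<Delta> \<rho> x Z n \<omega> - cmat (Ehat x n))"
        have e11: "?D $ 1 $ 1 = complex_of_real (U11 n \<omega>)"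
          unfolding mat_entry_scale_diff Etil_Gc GE cmat_nth EH U11_def by simp
        have e12: "?D $ 1 $ 2 = complex_of_real (U12 n \<omega>)"
          unfolding mat_entry_scale_diff Etil_Gc GE cmat_nth EH U12_def by simp
        have e21: "?D $ 2 $ 1 = complex_of_real (U12 n \<omega>)"
          unfolding mat_entry_scale_diff Etil_Gc GE cmat_nth EH U12_def by simp
        have e22: "?D $ 2 $ 2 = complex_of_real (U22 n \<omega>)"
          unfolding mat_entry_scale_diff Etil_Gc GE cmat_nth EH U22_def by simp
        have "dist ?D 0 = norm ?D" by simp
        also have "\<dots> \<le> \<bar>U11 n \<omega>\<bar> + \<bar>U12 n \<omega>\<bar> + \<bar>U12 n \<omega>\<bar> + \<bar>U22 n \<omega>\<bar>"
          using norm_mat2_le[of ?D] unfolding e11 e12 e21 e22 by simp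
        also have "\<dots> = dist (\<bar>U11 n \<omega>\<bar> + \<bar>U12 n \<omega>\<bar> + \<bar>U12 n \<omega>\<bar> + \<bar>U22 n \<omega>\<bar>) 0" by simp
        finally show "dist ?D 0 \<le> dist (\<bar>U11 n \<omega>\<bar> + \<bar>U12 n \<omega>\<bar> + \<bar>U12 n \<omega>\<bar> + \<bar>U22 n \<omega>\<bar>) 0" .
      qed
    qed
  qed
qed

lemma P10b: "cpr M (Etil \<Delta> \<rho> x Z) (cmat (vector [vector [g11 cx cx2, g12 cx cx2], vector [g12 cx cx2, g22 cx cx2]]))"
proof -
  let ?T1 = "tx \<Delta> \<rho> x Z" and ?T2 = "tx2 \<Delta> \<rho> x Z"
  define U11 where "U11 n \<omega> = g11 (?T1 n \<omega>) (?T2 n \<omega>) - g11 cx cx2" for n \<omega>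
  define U12 where "U12 n \<omega> = g12 (?T1 n \<omega>) (?T2 n \<omega>) - g12 cx cx2" for n \<omega>
  define U22 where "U22 n \<omega> = g22 (?T1 n \<omega>) (?T2 n \<omega>) - g22 cx cx2" for n \<omega>
  have u11: "cpr M U11 0" unfolding U11_def
    using cpr_diff[OF conjunct1[OF conjunct2[OF G11[unfolded close2_def]]] cpr_cconst[OF cpr_T1, of "g11 cx cx2"]] by simp
  have u12: "cpr M U12 0" unfolding U12_def
    using cpr_diff[OF conjunct1[OF conjunct2[OF G12[unfolded close2_def]]] cpr_cconst[OF cpr_T1, of "g12 cx cx2"]] by simp
  have u22: "cpr M U22 0" unfolding U22_def
    using cpr_diff[OF conjunct1[OF conjunct2[OF G22[unfolded close2_def]]] cpr_cconst[OF cpr_T1, of "g22 cx cx2"]] by simp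
  have "cpr M (\<lambda>n \<omega>. \<bar>U11 n \<omega>\<bar> + \<bar>U12 n \<omega>\<bar> + \<bar>U12 n \<omega>\<bar> + \<bar>U22 n \<omega>\<bar>) (\<bar>0\<bar> + \<bar>0\<bar> + \<bar>0\<bar> + \<bar>0\<bar>)"
    by (intro cpr_add cpr_abs u11 u12 u22)
  then have cY: "cpr M (\<lambda>n \<omega>. \<bar>U11 n \<omega>\<bar> + \<bar>U12 n \<omega>\<bar> + \<bar>U12 n \<omega>\<bar> + \<bar>U22 n \<omega>\<bar>) 0" by simp
  have cT: "cpr M (\<lambda>n \<omega>. ?T2 n \<omega> - ?T1 n \<omega> * ?T1 n \<omega>) (cx2 - cx * cx)"
    using C_sx unfolding close2_def by blast
  show ?thesis
  proof (rule cpr_le_on[OF cY cT cb_pos])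
    let ?C = "cmat (vector [vector [g11 cx cx2, g12 cx cx2], vector [g12 cx cx2, g22 cx cx2]])"
    show "\<forall>\<^sub>F n in sequentially. \<forall>\<omega>\<in>space (M n).
      dist (?T2 n \<omega> - ?T1 n \<omega> * ?T1 n \<omega>) (cx2 - cx * cx) < cx2 - cx * cx \<longrightarrow>
      dist (Etil \<Delta> \<rho> x Z n \<omega>) ?C
        \<le> dist (\<bar>U11 n \<omega>\<bar> + \<bar>U12 n \<omega>\<bar> + \<bar>U12 n \<omega>\<bar> + \<bar>U22 n \<omega>\<bar>) 0"
    proof (intro always_eventually allI ballI impI)
      fix n \<omega> assume "\<omega> \<in> space (M n)"
        and d: "dist (?T2 n \<omega> - ?T1 n \<omega> * ?T1 n \<omega>) (cx2 - cx * cx) < cx2 - cx * cx"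
      have rp: "?T2 n \<omega> - ?T1 n \<omega> * ?T1 n \<omega> > 0" using region[OF d] .
      note GE = Gc_entries[OF rp]
      let ?D = "Etil \<Delta> \<rho> x Z n \<omega> - ?C"
      have e11: "?D $ 1 $ 1 = complex_of_real (U11 n \<omega>)"
        unfolding vector_minus_component Etil_Gc GE cmat_nth U11_def by simp
      have e12: "?D $ 1 $ 2 = complex_of_real (U12 n \<omega>)"
        unfolding vector_minus_component Etil_Gc GE cmat_nth U12_def by simp
      have e21: "?D $ 2 $ 1 = complex_of_real (U12 n \<omega>)"
        unfolding vector_minus_component Etil_Gc GE cmat_nth U12_def by simp
      have e22: "?D $ 2 $ 2 = complex_of_real (U22 n \<omega>)"
        unfolding vector_minus_component Etil_Gc GE cmat_nth U22_def by simp
      have "dist (Etil \<Delta> \<rho> x Z n \<omega>) ?C = norm ?D" by (simp add: dist_norm)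
      also have "\<dots> \<le> \<bar>U11 n \<omega>\<bar> + \<bar>U12 n \<omega>\<bar> + \<bar>U12 n \<omega>\<bar> + \<bar>U22 n \<omega>\<bar>"
        using norm_mat2_le[of ?D] unfolding e11 e12 e21 e22 by simp
      also have "\<dots> = dist (\<bar>U11 n \<omega>\<bar> + \<bar>U12 n \<omega>\<bar> + \<bar>U12 n \<omega>\<bar> + \<bar>U22 n \<omega>\<bar>) 0" by simp
      finally show "dist (Etil \<Delta> \<rho> x Z n \<omega>) ?C \<le> dist (\<bar>U11 n \<omega>\<bar> + \<bar>U12 n \<omega>\<bar> + \<bar>U12 n \<omega>\<bar> + \<bar>U22 n \<omega>\<bar>) 0" .
    qed
  qed
qed

lemma P11: "cpr M (\<lambda>n \<omega>. vector [ty \<Delta> \<rho> y Z n \<omega>, txy \<Delta> \<rho> x y Z n \<omega>] :: real^2)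
              (vector [\<beta>2 + \<beta>1 * cx, \<beta>2 * cx + \<beta>1 * cx2])"
proof -
  have c1: "cpr M (ty \<Delta> \<rho> y Z) (\<beta>2 + \<beta>1 * cx)" using C_y unfolding close2_def by blast
  have c2: "cpr M (txy \<Delta> \<rho> x y Z) (\<beta>2 * cx + \<beta>1 * cx2)" using C_xy unfolding close2_def by blast
  have "cpr M (\<lambda>n \<omega>. \<bar>ty \<Delta> \<rho> y Z n \<omega> - (\<beta>2 + \<beta>1 * cx)\<bar> + \<bar>txy \<Delta> \<rho> x y Z n \<omega> - (\<beta>2 * cx + \<beta>1 * cx2)\<bar>)
            (\<bar>(\<beta>2 + \<beta>1 * cx) - (\<beta>2 + \<beta>1 * cx)\<bar> + \<bar>(\<beta>2 * cx + \<beta>1 * cx2) - (\<beta>2 * cx + \<beta>1 * cx2)\<bar>)"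
    by (intro cpr_add cpr_abs cpr_diff c1 c2 cpr_cconst[OF c1])
  then have cY: "cpr M (\<lambda>n \<omega>. \<bar>ty \<Delta> \<rho> y Z n \<omega> - (\<beta>2 + \<beta>1 * cx)\<bar> + \<bar>txy \<Delta> \<rho> x y Z n \<omega> - (\<beta>2 * cx + \<beta>1 * cx2)\<bar>) 0"
    by simp
  show ?thesis
  proof (rule cpr_le[OF cY], intro always_eventually allI ballI)
    fix n \<omega>
    let ?v = "vector [ty \<Delta> \<rho> y Z n \<omega>, txy \<Delta> \<rho> x y Z n \<omega>] - vector [\<beta>2 + \<beta>1 * cx, \<beta>2 * cx + \<beta>1 * cx2] :: real^2"
    have "dist (vector [ty \<Delta> \<rho> y Z n \<omega>, txy \<Delta> \<rho> x y Z n \<omega>] :: real^2) (vector [\<beta>2 + \<beta>1 * cx, \<beta>2 * cx + \<beta>1 * cx2]) = norm ?v"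
      by (simp add: dist_norm)
    also have "\<dots> \<le> \<bar>?v$1\<bar> + \<bar>?v$2\<bar>" by (rule norm_vec2_le)
    finally show "dist (vector [ty \<Delta> \<rho> y Z n \<omega>, txy \<Delta> \<rho> x y Z n \<omega>] :: real^2) (vector [\<beta>2 + \<beta>1 * cx, \<beta>2 * cx + \<beta>1 * cx2])
        \<le> dist (\<bar>ty \<Delta> \<rho> y Z n \<omega> - (\<beta>2 + \<beta>1 * cx)\<bar> + \<bar>txy \<Delta> \<rho> x y Z n \<omega> - (\<beta>2 * cx + \<beta>1 * cx2)\<bar>) 0"
      by simp
  qed
qed

end

lemma close_abs:
  assumes "close M A B"
  shows "cpr M (\<lambda>n \<omega>. sqrt (real n) * \<bar>A n \<omega> - B n \<omega>\<bar>) 0"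
  by (rule cpr_le[OF assms[unfolded close_def]]) (auto simp: abs_mult)

context L begin

lemma main:
  shows
    "let cy = \<beta>2 + \<beta>1 * cx;
         cxy = \<beta>2 * cx + \<beta>1 * cx2;
         ca = cxy - cx * cy;
         cb = cx2 - cx^2;
         cy2 = \<beta>2^2 + 2 * cx * \<beta>1 * \<beta>2 + \<beta>1^2 * cx2 + \<sigma>e^2;
         Chalf = (1 / sqrt (cx2 + 1 + 2 * sqrt cb)) *\<^sub>R
                   (vector [vector [1 + sqrt cb, cx], vector [cx, cx2 + sqrt cb]] :: real^2^2);
         xb = (\<lambda>n. mean n (\<lambda>i. x n i));
         x2b = (\<lambda>n. mean n (\<lambda>i. (x n i)^2));
         yb = (\<lambda>n \<omega>. mean n (\<lambda>i. y n i \<omega>));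
         xyb = (\<lambda>n \<omega>. mean n (\<lambda>i. x n i * y n i \<omega>));
         sxh = (\<lambda>n. x2b n - (xb n)^2)
     in
      conv_prob M (\<lambda>n \<omega>. sqrt (real n) * \<bar>tx \<Delta> \<rho> x Z n \<omega> - xb n\<bar>) 0
    \<and> conv_prob M (tx \<Delta> \<rho> x Z) cx
    \<and> conv_prob M (\<lambda>n \<omega>. sqrt (real n) * \<bar>ty \<Delta> \<rho> y Z n \<omega> - yb n \<omega>\<bar>) 0
    \<and> conv_prob M (ty \<Delta> \<rho> y Z) cy
    \<and> conv_prob M (\<lambda>n \<omega>. sqrt (real n) * \<bar>tx2 \<Delta> \<rho> x Z n \<omega> - x2b n\<bar>) 0
    \<and> conv_prob M (tx2 \<Delta> \<rho> x Z) cx2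
    \<and> conv_prob M (\<lambda>n \<omega>. sqrt (real n) * \<bar>txy \<Delta> \<rho> x y Z n \<omega> - xyb n \<omega>\<bar>) 0
    \<and> conv_prob M (txy \<Delta> \<rho> x y Z) cxy
    \<and> conv_prob M (\<lambda>n \<omega>. sqrt (real n) * \<bar>(tx \<Delta> \<rho> x Z n \<omega>)^2 - (xb n)^2\<bar>) 0
    \<and> conv_prob M (\<lambda>n \<omega>. sqrt (real n) *
          \<bar>tx \<Delta> \<rho> x Z n \<omega> * ty \<Delta> \<rho> y Z n \<omega> - xb n * yb n \<omega>\<bar>) 0
    \<and> conv_prob M (\<lambda>n \<omega>. txy \<Delta> \<rho> x y Z n \<omega> - tx \<Delta> \<rho> x Z n \<omega> * ty \<Delta> \<rho> y Z n \<omega>) ca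
    \<and> conv_prob M (tsx \<Delta> \<rho> x Z) cb \<and> cb \<noteq> 0
    \<and> conv_prob M (\<lambda>n \<omega>. sqrt (real n) * (tsx \<Delta> \<rho> x Z n \<omega> - sxh n)) 0
    \<and> conv_prob M (\<lambda>n \<omega>. sqrt (real n) *\<^sub>R (Etil \<Delta> \<rho> x Z n \<omega> - cmat (Ehat x n))) 0
    \<and> conv_prob M (Etil \<Delta> \<rho> x Z) (cmat Chalf)
    \<and> conv_prob M (\<lambda>n \<omega>. vector [ty \<Delta> \<rho> y Z n \<omega>, txy \<Delta> \<rho> x y Z n \<omega>] :: real^2) (vector [cy, cxy])
    \<and> conv_prob M (ty2 \<Delta> \<rho> y Z) cy2"
proof -
  have cy: "cpr M (ty \<Delta> \<rho> y Z) (\<beta>2 + \<beta>1 * cx)" using C_y unfolding close2_def by blast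
  have cxy: "cpr M (txy \<Delta> \<rho> x y Z) (\<beta>2 * cx + \<beta>1 * cx2)" using C_xy unfolding close2_def by blast
  have cx2: "cpr M (tx2 \<Delta> \<rho> x Z) cx2" using C_x2 unfolding close2_def by blast
  have s1: "cpr M (\<lambda>n \<omega>. sqrt (real n) * \<bar>tx \<Delta> \<rho> x Z n \<omega> - mean n (\<lambda>i. x n i)\<bar>) 0"
    using close_abs C_x unfolding close2_def by blast
  have s2: "cpr M (\<lambda>n \<omega>. sqrt (real n) * \<bar>ty \<Delta> \<rho> y Z n \<omega> - mean n (\<lambda>i. y n i \<omega>)\<bar>) 0"
    using close_abs C_y unfolding close2_def by blast
  have s3: "cpr M (\<lambda>n \<omega>. sqrt (real n) * \<bar>tx2 \<Delta> \<rho> x Z n \<omega> - mean n (\<lambda>i. (x n i)^2)\<bar>) 0"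
    using close_abs C_x2 unfolding close2_def by blast
  have s4: "cpr M (\<lambda>n \<omega>. sqrt (real n) * \<bar>txy \<Delta> \<rho> x y Z n \<omega> - mean n (\<lambda>i. x n i * y n i \<omega>)\<bar>) 0"
    using close_abs C_xy unfolding close2_def by blast
  have s5: "cpr M (\<lambda>n \<omega>. sqrt (real n) * \<bar>(tx \<Delta> \<rho> x Z n \<omega>)^2 - (mean n (\<lambda>i. x n i))^2\<bar>) 0"
  proof -
    have "close M (\<lambda>n \<omega>. tx \<Delta> \<rho> x Z n \<omega> * tx \<Delta> \<rho> x Z n \<omega>) (\<lambda>n \<omega>. mean n (\<lambda>i. x n i) * mean n (\<lambda>i. x n i))"
      using close2_mult[OF C_x C_x] unfolding close2_def by blast
    from close_abs[OF this] show ?thesis by (simp add: power2_eq_square)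
  qed
  have s6: "cpr M (\<lambda>n \<omega>. sqrt (real n) *
          \<bar>tx \<Delta> \<rho> x Z n \<omega> * ty \<Delta> \<rho> y Z n \<omega> - mean n (\<lambda>i. x n i) * mean n (\<lambda>i. y n i \<omega>)\<bar>) 0"
    using close_abs close2_mult[OF C_x C_y] unfolding close2_def by blast
  have s7: "cpr M (\<lambda>n \<omega>. txy \<Delta> \<rho> x y Z n \<omega> - tx \<Delta> \<rho> x Z n \<omega> * ty \<Delta> \<rho> y Z n \<omega>)
              ((\<beta>2 * cx + \<beta>1 * cx2) - cx * (\<beta>2 + \<beta>1 * cx))"
    by (intro cpr_diff cpr_mult cxy cy cpr_T1)
  have s8: "cpr M (tsx \<Delta> \<rho> x Z) (cx2 - cx^2)"
  proof -
    have "cpr M (\<lambda>n \<omega>. tx2 \<Delta> \<rho> x Z n \<omega> - tx \<Delta> \<rho> x Z n \<omega> * tx \<Delta> \<rho> x Z n \<omega>) (cx2 - cx * cx)"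
      using C_sx unfolding close2_def by blast
    then show ?thesis unfolding tsx_def by (simp add: power2_eq_square)
  qed
  have s9: "cpr M (\<lambda>n \<omega>. sqrt (real n) * (tsx \<Delta> \<rho> x Z n \<omega> - (mean n (\<lambda>i. (x n i)^2) - (mean n (\<lambda>i. x n i))^2))) 0"
  proof -
    have "close M (\<lambda>n \<omega>. tx2 \<Delta> \<rho> x Z n \<omega> - tx \<Delta> \<rho> x Z n \<omega> * tx \<Delta> \<rho> x Z n \<omega>)
        (\<lambda>n \<omega>. mean n (\<lambda>i. (x n i)^2) - mean n (\<lambda>i. x n i) * mean n (\<lambda>i. x n i))"
      using C_sx unfolding close2_def by blast
    then show ?thesis unfolding close_def tsx_def by (simp add: power2_eq_square)
  qed
  have s10b: "cpr M (Etil \<Delta> \<rho> x Z) (cmat ((1 / sqrt (cx2 + 1 + 2 * sqrt (cx2 - cx^2))) *\<^sub>R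
                   (vector [vector [1 + sqrt (cx2 - cx^2), cx], vector [cx, cx2 + sqrt (cx2 - cx^2)]] :: real^2^2)))"
    unfolding Chalf_eq[OF refl] by (rule P10b)
  have cbne: "cx2 - cx^2 \<noteq> 0" using A1c by simp
  show ?thesis
    unfolding Let_def
    by (intro conjI cpr_conv_prob s1 s2 s3 s4 s5 s6 s7 s8 s9 s10b cbne P10a P11 cpr_ty2 cpr_T1 cy cxy cx2
          C_x[unfolded close2_def, THEN conjunct2, THEN conjunct1])
qed

end

theorem lemma5p10:
  fixes M :: "nat \<Rightarrow> 'a measure"
    and x :: "nat \<Rightarrow> nat \<Rightarrow> real"
    and y :: "nat \<Rightarrow> nat \<Rightarrow> 'a \<Rightarrow> real"
    and Z :: "nat \<Rightarrow> nat \<Rightarrow> 'a \<Rightarrow> real"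
    and \<Delta> \<rho> :: "nat \<Rightarrow> real"
    and \<sigma>e \<beta>2 \<beta>1 cx cx2 \<eta> :: real
  assumes \<sigma>e_pos: "\<sigma>e > 0"
    and prob: "\<And>n. n > 2 \<Longrightarrow> prob_space (M n)"
    and y_distr: "\<And>n i. n > 2 \<Longrightarrow> i < n \<Longrightarrow>
                   distributed (M n) lborel (y n i) (normal_density (\<beta>2 + \<beta>1 * x n i) \<sigma>e)"
    and Z_distr: "\<And>n j. n > 2 \<Longrightarrow> j < 5 \<Longrightarrow> distributed (M n) lborel (Z n j) std_normal_density"
    and indep: "\<And>n. n > 2 \<Longrightarrow> prob_space.indep_vars (M n) (\<lambda>_. borel)
                   (\<lambda>k. case k of Inl i \<Rightarrow> y n i | Inr j \<Rightarrow> Z n j) ({..<n} <+> {..<5})"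
    and \<Delta>_pos: "\<And>n. n > 2 \<Longrightarrow> \<Delta> n > 0"
    and \<rho>_pos: "\<And>n. n > 2 \<Longrightarrow> \<rho> n > 0"
    and A1x: "(\<lambda>n. mean n (\<lambda>i. x n i)) \<longlonglongrightarrow> cx"
    and A1x2: "(\<lambda>n. mean n (\<lambda>i. (x n i)^2)) \<longlonglongrightarrow> cx2"
    and A1c: "cx2 > cx^2"
    and A2: "(\<lambda>n. (\<Sum>i<n. ((\<beta>2 + \<beta>1 * x n i)
                  - ((\<beta>2 + \<beta>1 * mean n (\<lambda>k. x n k)) + 0 * x n i))^2) / \<sigma>e^2) \<longlonglongrightarrow> \<eta>^2"
    and A3a: "(\<lambda>n. (\<Delta> n)^2 / (\<rho> n * real n)) \<longlonglongrightarrow> 0"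
    and A3b: "(\<lambda>n. (\<Delta> n)^4 / (\<rho> n * real n)) \<longlonglongrightarrow> 0"
    and A4y: "(\<lambda>n. measure (M n) {\<omega> \<in> space (M n). \<exists>i<n. y n i \<omega> \<notin> {- \<Delta> n .. \<Delta> n}}) \<longlonglongrightarrow> 0"
    and A4x: "\<And>n i. n > 2 \<Longrightarrow> i < n \<Longrightarrow> x n i \<in> {- \<Delta> n .. \<Delta> n}"
  shows
    "let cy = \<beta>2 + \<beta>1 * cx;
         cxy = \<beta>2 * cx + \<beta>1 * cx2;
         ca = cxy - cx * cy;
         cb = cx2 - cx^2;
         cy2 = \<beta>2^2 + 2 * cx * \<beta>1 * \<beta>2 + \<beta>1^2 * cx2 + \<sigma>e^2;
         Chalf = (1 / sqrt (cx2 + 1 + 2 * sqrt cb)) *\<^sub>R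
                   (vector [vector [1 + sqrt cb, cx], vector [cx, cx2 + sqrt cb]] :: real^2^2);
         xb = (\<lambda>n. mean n (\<lambda>i. x n i));
         x2b = (\<lambda>n. mean n (\<lambda>i. (x n i)^2));
         yb = (\<lambda>n \<omega>. mean n (\<lambda>i. y n i \<omega>));
         xyb = (\<lambda>n \<omega>. mean n (\<lambda>i. x n i * y n i \<omega>));
         sxh = (\<lambda>n. x2b n - (xb n)^2)
     in
      conv_prob M (\<lambda>n \<omega>. sqrt (real n) * \<bar>tx \<Delta> \<rho> x Z n \<omega> - xb n\<bar>) 0
    \<and> conv_prob M (tx \<Delta> \<rho> x Z) cx
    \<and> conv_prob M (\<lambda>n \<omega>. sqrt (real n) * \<bar>ty \<Delta> \<rho> y Z n \<omega> - yb n \<omega>\<bar>) 0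
    \<and> conv_prob M (ty \<Delta> \<rho> y Z) cy
    \<and> conv_prob M (\<lambda>n \<omega>. sqrt (real n) * \<bar>tx2 \<Delta> \<rho> x Z n \<omega> - x2b n\<bar>) 0
    \<and> conv_prob M (tx2 \<Delta> \<rho> x Z) cx2
    \<and> conv_prob M (\<lambda>n \<omega>. sqrt (real n) * \<bar>txy \<Delta> \<rho> x y Z n \<omega> - xyb n \<omega>\<bar>) 0
    \<and> conv_prob M (txy \<Delta> \<rho> x y Z) cxy
    \<and> conv_prob M (\<lambda>n \<omega>. sqrt (real n) * \<bar>(tx \<Delta> \<rho> x Z n \<omega>)^2 - (xb n)^2\<bar>) 0
    \<and> conv_prob M (\<lambda>n \<omega>. sqrt (real n) *
          \<bar>tx \<Delta> \<rho> x Z n \<omega> * ty \<Delta> \<rho> y Z n \<omega> - xb n * yb n \<omega>\<bar>) 0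
    \<and> conv_prob M (\<lambda>n \<omega>. txy \<Delta> \<rho> x y Z n \<omega> - tx \<Delta> \<rho> x Z n \<omega> * ty \<Delta> \<rho> y Z n \<omega>) ca
    \<and> conv_prob M (tsx \<Delta> \<rho> x Z) cb \<and> cb \<noteq> 0
    \<and> conv_prob M (\<lambda>n \<omega>. sqrt (real n) * (tsx \<Delta> \<rho> x Z n \<omega> - sxh n)) 0
    \<and> conv_prob M (\<lambda>n \<omega>. sqrt (real n) *\<^sub>R (Etil \<Delta> \<rho> x Z n \<omega> - cmat (Ehat x n))) 0
    \<and> conv_prob M (Etil \<Delta> \<rho> x Z) (cmat Chalf)
    \<and> conv_prob M (\<lambda>n \<omega>. vector [ty \<Delta> \<rho> y Z n \<omega>, txy \<Delta> \<rho> x y Z n \<omega>] :: real^2) (vector [cy, cxy])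
    \<and> conv_prob M (ty2 \<Delta> \<rho> y Z) cy2"
proof -
  interpret L M x y Z \<Delta> \<rho> \<sigma>e \<beta>2 \<beta>1 cx cx2
    by (rule L.intro[OF \<sigma>e_pos prob y_distr Z_distr indep \<Delta>_pos \<rho>_pos A1x A1x2 A1c A3a A3b A4y A4x])
  show ?thesis by (rule main)
qed

end
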